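(* Let $H$ be an Abelian group, $X$ a simplicial set, $Z\subset X$ a simplicial subset with inclusion $i$, $j:X\to X/Z$ the quotient. Let $\alpha:X_2\to H$ be a normalized 2-cocycle such that $i^*\alpha$ is a coboundary, and let $\nu:Z_1\to H$ be a normalized 1-cochain with $\partial\nu=i^*\alpha$. Let $\tilde\nu:X_1\to H$ be $\nu$ on $Z_1$ and $0$ elsewhere, and let $\beta:(X/Z)_2\to H$ be a normalized 2-cocycle with $j^*\beta=\alpha-\partial\tilde\nu$. Let $\mathrm{sDist}_\beta(X/Z)$ be the set of distributions on the twisted product over $X/Z$ determined by $\beta$, and $\mathrm{sDist}_\alpha(X,\nu)$ the set of distributions $p$ on the twisted product over $X$ determined by $\alpha$ whose restriction to $Z$ equals $\delta^{\varphi_\nu}$. Then there is a convex isomorphism \[ \mathrm{sDist}_\beta(X/Z)\cong \mathrm{sDist}_\alpha(X,\nu). \]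
   Context: Distributions take values in $\mathbb{R}_{\ge0}$: $D(S)$ = finitely supported probability distributions on $S$, extended levelwise to simplicial sets; a distribution on a simplicial map $\pi:E\to Y$ is a simplicial map $p:Y\to D(E)$ with $D(\pi)\circ p=\delta$. $N(H)$ is the nerve of $H$ ($N(H)_n=H^n$, $d_0$ drops first entry, $d_n$ last, inner $d_i$ add adjacent entries, $s_j$ inserts $0$). A normalized $n$-cochain is a map $Y_n\to H$ vanishing on degenerate simplices; $\partial$ is the coboundary, e.g. $\partial\nu(x)=\nu(d_0x)-\nu(d_1x)+\nu(d_2x)$; $i^*,j^*$ are precomposition. A normalized 2-cocycle $\gamma$ on $Y$ determines the twisting function $\eta_1=0,\eta_2=\gamma$, $\eta_n(y)=(\gamma(d_3\cdots d_ny),\eta_{n-1}(d_1y)-\eta_{n-1}(d_0y))$, and the twisted product $N(H)\times_\eta Y$ with simplices $H^n\times Y_n$, $d_0(g,y)=(d_0g+\eta_n(y),d_0y)$ and other structure maps componentwise; $\pi_\eta$ is the projection. The restriction of $p$ to $Z$ is $p\circ i$, a distribution on the restricted bundle over $Z$ (twisted by $i^*\alpha$). A section of $\pi_\eta$ is a simplicial map $s$ with $\pi_\eta s=\mathrm{id}$; $\varphi_\nu$ denotes the unique section of the restricted bundle over $Z$ whose $H$-component on $1$-simplices is $\nu$ (in degrees $0,1,2$: $z\mapsto(0,z)$, $(\nu(z),z)$, $((\nu(d_2z),\nu(d_1z)-\nu(d_2z)),z)$), and $\delta^{\varphi_\nu}=\delta\circ\varphi_\nu$. *)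

theory Defs
  imports Complex_Main
begin

text \<open>A simplicial set: carriers per degree, face maps fc n i : X_n -> X_(n-1) (for n >= 1,
  i <= n) and degeneracies dg n j : X_n -> X_(n+1) (j <= n). Values off the carriers are
  irrelevant.\<close>

record 'a sset =
  cells :: "nat \<Rightarrow> 'a set"
  fc :: "nat \<Rightarrow> nat \<Rightarrow> 'a \<Rightarrow> 'a"
  dg :: "nat \<Rightarrow> nat \<Rightarrow> 'a \<Rightarrow> 'a"

definition is_sset :: "('a, 'b) sset_scheme \<Rightarrow> bool" where
  "is_sset X \<longleftrightarrow>
     (\<forall>n i x. i \<le> Suc n \<longrightarrow> x \<in> cells X (Suc n) \<longrightarrow> fc X (Suc n) i x \<in> cells X n) \<and>
     (\<forall>n j x. j \<le> n \<longrightarrow> x \<in> cells X n \<longrightarrow> dg X n j x \<in> cells X (Suc n)) \<and>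
     (\<forall>n i j x. i < j \<longrightarrow> j \<le> Suc (Suc n) \<longrightarrow> x \<in> cells X (Suc (Suc n)) \<longrightarrow>
        fc X (Suc n) i (fc X (Suc (Suc n)) j x) = fc X (Suc n) (j - 1) (fc X (Suc (Suc n)) i x)) \<and>
     (\<forall>n i j x. i \<le> j \<longrightarrow> j \<le> n \<longrightarrow> x \<in> cells X n \<longrightarrow>
        dg X (Suc n) i (dg X n j x) = dg X (Suc n) (Suc j) (dg X n i x)) \<and>
     (\<forall>n i j x. i < j \<longrightarrow> j \<le> n \<longrightarrow> x \<in> cells X n \<longrightarrow>
        fc X (Suc n) i (dg X n j x) = dg X (n - 1) (j - 1) (fc X n i x)) \<and>
     (\<forall>n j x. j \<le> n \<longrightarrow> x \<in> cells X n \<longrightarrow>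
        fc X (Suc n) j (dg X n j x) = x \<and> fc X (Suc n) (Suc j) (dg X n j x) = x) \<and>
     (\<forall>n i j x. Suc j < i \<longrightarrow> i \<le> Suc n \<longrightarrow> x \<in> cells X n \<longrightarrow>
        fc X (Suc n) i (dg X n j x) = dg X (n - 1) j (fc X n (i - 1) x))"

definition smap :: "('a, 'c) sset_scheme \<Rightarrow> ('b, 'd) sset_scheme \<Rightarrow> (nat \<Rightarrow> 'a \<Rightarrow> 'b) \<Rightarrow> bool" where
  "smap X Y f \<longleftrightarrow>
     (\<forall>n x. x \<in> cells X n \<longrightarrow> f n x \<in> cells Y n) \<and>
     (\<forall>n i x. i \<le> Suc n \<longrightarrow> x \<in> cells X (Suc n) \<longrightarrow>
        f n (fc X (Suc n) i x) = fc Y (Suc n) i (f (Suc n) x)) \<and>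
     (\<forall>n j x. j \<le> n \<longrightarrow> x \<in> cells X n \<longrightarrow>
        f (Suc n) (dg X n j x) = dg Y n j (f n x))"

definition is_subsset :: "('a, 'b) sset_scheme \<Rightarrow> (nat \<Rightarrow> 'a set) \<Rightarrow> bool" where
  "is_subsset X Z \<longleftrightarrow>
     (\<forall>n. Z n \<subseteq> cells X n) \<and>
     (\<forall>n i x. i \<le> Suc n \<longrightarrow> x \<in> Z (Suc n) \<longrightarrow> fc X (Suc n) i x \<in> Z n) \<and>
     (\<forall>n j x. j \<le> n \<longrightarrow> x \<in> Z n \<longrightarrow> dg X n j x \<in> Z (Suc n))"

definition restr :: "'a sset \<Rightarrow> (nat \<Rightarrow> 'a set) \<Rightarrow> 'a sset" where
  "restr X Z = X\<lparr>cells := Z\<rparr>"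

text \<open>Quotient X/Z, modelled as the pushout of the point along Z -> X: the n-simplices are
  the n-simplices of X not in Z (tagged with Some) together with one base point None.\<close>
definition quot :: "'a sset \<Rightarrow> (nat \<Rightarrow> 'a set) \<Rightarrow> 'a option sset" where
  "quot X Z = \<lparr> cells = (\<lambda>n. Some ` (cells X n - Z n) \<union> {None}),
     fc = (\<lambda>n i x. case x of None \<Rightarrow> None
                 | Some a \<Rightarrow> (if fc X n i a \<in> Z (n - 1) then None else Some (fc X n i a))),
     dg = (\<lambda>n j x. map_option (dg X n j) x) \<rparr>"

definition qmap :: "(nat \<Rightarrow> 'a set) \<Rightarrow> nat \<Rightarrow> 'a \<Rightarrow> 'a option" where
  "qmap Z n a = (if a \<in> Z n then None else Some a)"

definition normalized_cochain :: "('a, 'b) sset_scheme \<Rightarrow> nat \<Rightarrow> ('a \<Rightarrow> 'h::ab_group_add) \<Rightarrow> bool" where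
  "normalized_cochain Y n f \<longleftrightarrow>
     (\<forall>m j x. Suc m = n \<longrightarrow> j \<le> m \<longrightarrow> x \<in> cells Y m \<longrightarrow> f (dg Y m j x) = 0)"

definition cobdry1 :: "('a, 'b) sset_scheme \<Rightarrow> ('a \<Rightarrow> 'h::ab_group_add) \<Rightarrow> 'a \<Rightarrow> 'h" where
  "cobdry1 Y \<nu> x = \<nu> (fc Y 2 0 x) - \<nu> (fc Y 2 1 x) + \<nu> (fc Y 2 2 x)"

definition cobdry2 :: "('a, 'b) sset_scheme \<Rightarrow> ('a \<Rightarrow> 'h::ab_group_add) \<Rightarrow> 'a \<Rightarrow> 'h" where
  "cobdry2 Y \<gamma> x = \<gamma> (fc Y 3 0 x) - \<gamma> (fc Y 3 1 x) + \<gamma> (fc Y 3 2 x) - \<gamma> (fc Y 3 3 x)"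

definition normalized_2cocycle :: "('a, 'b) sset_scheme \<Rightarrow> ('a \<Rightarrow> 'h::ab_group_add) \<Rightarrow> bool" where
  "normalized_2cocycle Y \<gamma> \<longleftrightarrow> normalized_cochain Y 2 \<gamma> \<and> (\<forall>x \<in> cells Y 3. cobdry2 Y \<gamma> x = 0)"

text \<open>Nerve N(H): n-simplices are lists of length n.\<close>
definition nerve_face :: "nat \<Rightarrow> nat \<Rightarrow> 'h::ab_group_add list \<Rightarrow> 'h list" where
  "nerve_face n i g =
     (if i = 0 then tl g
      else if i = n then butlast g
      else take (i - 1) g @ [g ! (i - 1) + g ! i] @ drop (Suc i) g)"

definition nerve_degen :: "nat \<Rightarrow> 'h::ab_group_add list \<Rightarrow> 'h list" where
  "nerve_degen j g = take j g @ 0 # drop j g"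

fun lastfaces :: "('a, 'b) sset_scheme \<Rightarrow> nat \<Rightarrow> nat \<Rightarrow> 'a \<Rightarrow> 'a" where
  "lastfaces Y 0 m y = y"
| "lastfaces Y (Suc k) m y = lastfaces Y k (m - 1) (fc Y m m y)"

fun eta :: "('a, 'b) sset_scheme \<Rightarrow> ('a \<Rightarrow> 'h::ab_group_add) \<Rightarrow> nat \<Rightarrow> 'a \<Rightarrow> 'h list" where
  "eta Y \<gamma> 0 y = []"
| "eta Y \<gamma> (Suc 0) y = []"
| "eta Y \<gamma> (Suc (Suc n)) y =
     \<gamma> (lastfaces Y n (Suc (Suc n)) y) #
       map2 (-) (eta Y \<gamma> (Suc n) (fc Y (Suc (Suc n)) 1 y)) (eta Y \<gamma> (Suc n) (fc Y (Suc (Suc n)) 0 y))"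

text \<open>Twisted product N(H) x_eta Y; the projection pi_eta is snd.\<close>
definition twisted :: "('a, 'b) sset_scheme \<Rightarrow> ('a \<Rightarrow> 'h::ab_group_add) \<Rightarrow> ('h list \<times> 'a) sset" where
  "twisted Y \<gamma> = \<lparr> cells = (\<lambda>n. {(g, y). length g = n \<and> y \<in> cells Y n}),
     fc = (\<lambda>n i (g, y). if i = 0 then (map2 (+) (tl g) (eta Y \<gamma> n y), fc Y n 0 y)
                        else (nerve_face n i g, fc Y n i y)),
     dg = (\<lambda>n j (g, y). (nerve_degen j g, dg Y n j y)) \<rparr>"

definition supp :: "('e \<Rightarrow> real) \<Rightarrow> 'e set" where
  "supp f = {a. f a \<noteq> 0}"

definition Dist :: "'e set \<Rightarrow> ('e \<Rightarrow> real) set" where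
  "Dist S = {f. (\<forall>a. 0 \<le> f a) \<and> finite (supp f) \<and> supp f \<subseteq> S \<and> sum f (supp f) = 1}"

definition Dmap :: "('e \<Rightarrow> 'f) \<Rightarrow> ('e \<Rightarrow> real) \<Rightarrow> ('f \<Rightarrow> real)" where
  "Dmap \<phi> f = (\<lambda>b. sum f {a \<in> supp f. \<phi> a = b})"

definition delta :: "'e \<Rightarrow> ('e \<Rightarrow> real)" where
  "delta x = (\<lambda>a. if a = x then 1 else 0)"

definition Dsset :: "('e, 'b) sset_scheme \<Rightarrow> ('e \<Rightarrow> real) sset" where
  "Dsset E = \<lparr> cells = (\<lambda>n. Dist (cells E n)),
     fc = (\<lambda>n i. Dmap (fc E n i)), dg = (\<lambda>n j. Dmap (dg E n j)) \<rparr>"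

text \<open>Off the carriers of Y we fix p to be 0,
  so that such p form a set of functions.\<close>
definition sdist :: "('a, 'b) sset_scheme \<Rightarrow> ('a \<Rightarrow> 'h::ab_group_add)
                      \<Rightarrow> (nat \<Rightarrow> 'a \<Rightarrow> ('h list \<times> 'a \<Rightarrow> real)) \<Rightarrow> bool" where
  "sdist Y \<gamma> p \<longleftrightarrow>
     smap Y (Dsset (twisted Y \<gamma>)) p \<and>
     (\<forall>n y. y \<in> cells Y n \<longrightarrow> Dmap snd (p n y) = delta y) \<and>
     (\<forall>n y. y \<notin> cells Y n \<longrightarrow> p n y = (\<lambda>_. 0))"

definition sDist :: "('a, 'b) sset_scheme \<Rightarrow> ('a \<Rightarrow> 'h::ab_group_add)
                      \<Rightarrow> (nat \<Rightarrow> 'a \<Rightarrow> ('h list \<times> 'a \<Rightarrow> real)) set" where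
  "sDist Y \<gamma> = {p. sdist Y \<gamma> p}"

text \<open>It is encoded by its H-component g (the section is
  z |-> (g n z, z)), normalised to [] off Z.\<close>
definition phi_nu :: "'a sset \<Rightarrow> (nat \<Rightarrow> 'a set) \<Rightarrow> ('a \<Rightarrow> 'h::ab_group_add) \<Rightarrow> ('a \<Rightarrow> 'h)
                      \<Rightarrow> nat \<Rightarrow> 'a \<Rightarrow> 'h list" where
  "phi_nu X Z \<alpha> \<nu> = (THE g. smap (restr X Z) (twisted (restr X Z) \<alpha>) (\<lambda>n z. (g n z, z)) \<and>
                              (\<forall>z \<in> Z 1. g 1 z = [\<nu> z]) \<and>
                              (\<forall>n z. z \<notin> Z n \<longrightarrow> g n z = []))"

definition sDist_rel :: "'a sset \<Rightarrow> (nat \<Rightarrow> 'a set) \<Rightarrow> ('a \<Rightarrow> 'h::ab_group_add) \<Rightarrow> ('a \<Rightarrow> 'h)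
                      \<Rightarrow> (nat \<Rightarrow> 'a \<Rightarrow> ('h list \<times> 'a \<Rightarrow> real)) set" where
  "sDist_rel X Z \<alpha> \<nu> = {p \<in> sDist X \<alpha>. \<forall>n. \<forall>z \<in> Z n. p n z = delta (phi_nu X Z \<alpha> \<nu> n z, z)}"

definition mixd :: "real \<Rightarrow> (nat \<Rightarrow> 'a \<Rightarrow> ('e \<Rightarrow> real)) \<Rightarrow> (nat \<Rightarrow> 'a \<Rightarrow> ('e \<Rightarrow> real))
                    \<Rightarrow> (nat \<Rightarrow> 'a \<Rightarrow> ('e \<Rightarrow> real))" where
  "mixd t p q = (\<lambda>n y e. t * p n y e + (1 - t) * q n y e)"

definition convex_iso :: "(nat \<Rightarrow> 'a \<Rightarrow> ('e \<Rightarrow> real)) set \<Rightarrow> (nat \<Rightarrow> 'b \<Rightarrow> ('f \<Rightarrow> real)) set \<Rightarrow>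
     ((nat \<Rightarrow> 'a \<Rightarrow> ('e \<Rightarrow> real)) \<Rightarrow> (nat \<Rightarrow> 'b \<Rightarrow> ('f \<Rightarrow> real))) \<Rightarrow> bool" where
  "convex_iso A B F \<longleftrightarrow> bij_betw F A B \<and>
     (\<forall>p \<in> A. \<forall>q \<in> A. \<forall>t \<in> {0..1}. F (mixd t p q) = mixd t (F p) (F q))"

end

theory Submission
  imports Defs
begin

lemma nf_len: "length g = Suc n \<Longrightarrow> i \<le> Suc n \<Longrightarrow> length (nerve_face (Suc n) i g) = n"
  unfolding nerve_face_def by (auto simp: min_def)

lemma nf_nth: "length g = Suc n \<Longrightarrow> 1 \<le> i \<Longrightarrow> i \<le> Suc n \<Longrightarrow> k < n \<Longrightarrow>
  nerve_face (Suc n) i g ! k = (if k < i - 1 then g ! k else if k = i - 1 then g ! (i - 1) + g ! i else g ! Suc k)"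
  unfolding nerve_face_def
  by (auto simp: nth_append nth_butlast min_def)

lemma nf0: "nerve_face n 0 g = tl g"
  unfolding nerve_face_def by simp

lemma nf_map2_add:
  fixes a b :: "'h::ab_group_add list"
  assumes "length a = Suc n" "length b = Suc n" "i \<le> Suc n" "1 \<le> i"
  shows "nerve_face (Suc n) i (map2 (+) a b) = map2 (+) (nerve_face (Suc n) i a) (nerve_face (Suc n) i b)"
  by (rule nth_equalityI) (use assms in \<open>auto simp: nf_len nf_nth\<close>)

lemma nf_map2_diff:
  fixes a b :: "'h::ab_group_add list"
  assumes "length a = Suc n" "length b = Suc n" "i \<le> Suc n" "1 \<le> i"
  shows "nerve_face (Suc n) i (map2 (-) a b) = map2 (-) (nerve_face (Suc n) i a) (nerve_face (Suc n) i b)"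
  by (rule nth_equalityI) (use assms in \<open>auto simp: nf_len nf_nth\<close>)

lemma nf_cons:
  fixes l :: "'h::ab_group_add list"
  assumes "length l = n" "2 \<le> i" "i \<le> Suc n"
  shows "nerve_face (Suc n) i (a # l) = a # nerve_face n (i - 1) l"
proof -
  obtain m where n: "n = Suc m" using assms by (cases n) auto
  show ?thesis
    by (rule nth_equalityI) (use assms n in \<open>auto simp: nf_len nf_nth nth_Cons split: nat.splits\<close>)
qed

lemma nf_cons1:
  fixes l :: "'h::ab_group_add list"
  assumes "length l = Suc n"
  shows "nerve_face (Suc (Suc n)) 1 (a # l) = (a + hd l) # tl l"
  using assms unfolding nerve_face_def by (cases l) auto

lemma nf_zero:
  assumes "i \<le> Suc n"
  shows "nerve_face (Suc n) i (replicate (Suc n) (0::'h::ab_group_add)) = replicate n 0"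
proof (cases "i = 0")
  case True then show ?thesis by (simp add: nf0)
next
  case False
  then show ?thesis
    by (intro nth_equalityI) (use assms in \<open>auto simp: nf_len nf_nth nth_Cons'\<close>)
qed

lemma nd_len: "length (nerve_degen j g) = Suc (length g)"
  unfolding nerve_degen_def by (auto simp: min_def)

lemma nd_nth: "j \<le> length g \<Longrightarrow> k < Suc (length g) \<Longrightarrow>
  nerve_degen j g ! k = (if k < j then g ! k else if k = j then 0 else g ! (k - 1))"
  unfolding nerve_degen_def by (auto simp: nth_append min_def nth_Cons')

lemma nd_map2_add:
  fixes a b :: "'h::ab_group_add list"
  assumes "length a = n" "length b = n" "j \<le> n"
  shows "nerve_degen j (map2 (+) a b) = map2 (+) (nerve_degen j a) (nerve_degen j b)"
  by (rule nth_equalityI) (use assms in \<open>auto simp: nd_len nd_nth\<close>)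

lemma nd_map2_diff:
  fixes a b :: "'h::ab_group_add list"
  assumes "length a = n" "length b = n" "j \<le> n"
  shows "nerve_degen j (map2 (-) a b) = map2 (-) (nerve_degen j a) (nerve_degen j b)"
  by (rule nth_equalityI) (use assms in \<open>auto simp: nd_len nd_nth\<close>)

lemma nd_cons: "1 \<le> j \<Longrightarrow> nerve_degen j (a # l) = a # nerve_degen (j - 1) l"
  unfolding nerve_degen_def by (cases j) auto

lemma nd0: "nerve_degen 0 l = 0 # l"
  unfolding nerve_degen_def by simp

lemma nd_zero: "j \<le> n \<Longrightarrow> nerve_degen j (replicate n (0::'h::ab_group_add)) = replicate (Suc n) 0"
  by (rule nth_equalityI) (auto simp: nd_len nd_nth nth_Cons')

section \<open>Distributions\<close>

lemma Dmap_S: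
  assumes "finite S" "supp f \<subseteq> S"
  shows "Dmap \<phi> f b = sum f {a \<in> S. \<phi> a = b}"
  unfolding Dmap_def
  by (rule sum.mono_neutral_left) (use assms in \<open>auto simp: supp_def\<close>)

lemma supp_Dmap: "supp (Dmap \<phi> f) \<subseteq> \<phi> ` supp f"
proof
  fix b assume "b \<in> supp (Dmap \<phi> f)"
  then have "sum f {a \<in> supp f. \<phi> a = b} \<noteq> 0" unfolding supp_def Dmap_def by simp
  then have "{a \<in> supp f. \<phi> a = b} \<noteq> {}" by (intro notI) simp
  then show "b \<in> \<phi> ` supp f" by auto
qed

lemma Dmap_comp:
  assumes "finite (supp f)"
  shows "Dmap \<psi> (Dmap \<phi> f) = Dmap (\<lambda>a. \<psi> (\<phi> a)) f"
proof
  fix b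
  define S where "S = {a \<in> supp f. \<psi> (\<phi> a) = b}"
  define T where "T = {c \<in> \<phi> ` supp f. \<psi> c = b}"
  have fin: "finite (\<phi> ` supp f)" using assms by auto
  have fS: "finite S" unfolding S_def using assms by auto
  have fT: "finite T" unfolding T_def using fin by auto
  have sub: "\<phi> ` S \<subseteq> T" unfolding S_def T_def by auto
  have "Dmap \<psi> (Dmap \<phi> f) b = sum (Dmap \<phi> f) T"
    unfolding T_def by (rule Dmap_S[OF fin supp_Dmap])
  also have "\<dots> = (\<Sum>c\<in>T. sum f {a. a \<in> S \<and> \<phi> a = c})"
  proof (rule sum.cong[OF refl])
    fix c assume "c \<in> T"
    then have "{a \<in> supp f. \<phi> a = c} = {a. a \<in> S \<and> \<phi> a = c}"
      unfolding S_def T_def by blast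
    then show "Dmap \<phi> f c = sum f {a. a \<in> S \<and> \<phi> a = c}"
      unfolding Dmap_def by simp
  qed
  also have "\<dots> = sum f S"
    by (rule sum.group[OF fS fT sub])
  finally show "Dmap \<psi> (Dmap \<phi> f) b = Dmap (\<lambda>a. \<psi> (\<phi> a)) f b"
    unfolding Dmap_def[of "\<lambda>a. \<psi> (\<phi> a)"] S_def by simp
qed

lemma Dmap_cong: "(\<And>a. a \<in> supp f \<Longrightarrow> \<phi> a = \<psi> a) \<Longrightarrow> Dmap \<phi> f = Dmap \<psi> f"
  unfolding Dmap_def by (intro ext sum.cong) auto

lemma supp_delta: "supp (delta a) = {a}"
  unfolding supp_def delta_def by auto

lemma Dmap_delta: "Dmap \<phi> (delta a) = delta (\<phi> a)"
proof
  fix b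
  have "{x \<in> supp (delta a). \<phi> x = b} = (if \<phi> a = b then {a} else {})"
    unfolding supp_delta by auto
  then show "Dmap \<phi> (delta a) b = delta (\<phi> a) b"
    unfolding Dmap_def by (auto simp: delta_def)
qed

lemma delta_Dist: "a \<in> S \<Longrightarrow> delta a \<in> Dist S"
  unfolding Dist_def by (auto simp: supp_delta) (auto simp: delta_def)

lemma Dmap_id: "Dmap (\<lambda>a. a) f = f"
proof
  fix b
  have "{a \<in> supp f. a = b} = (if f b = 0 then {} else {b})" by (auto simp: supp_def)
  then show "Dmap (\<lambda>a. a) f b = f b" unfolding Dmap_def by auto
qed

lemma Dist_nonneg: "f \<in> Dist S \<Longrightarrow> 0 \<le> f a"
  unfolding Dist_def by auto

lemma Dist_fin: "f \<in> Dist S \<Longrightarrow> finite (supp f)"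
  unfolding Dist_def by auto

lemma Dmap_const:
  assumes "f \<in> Dist S"
  shows "Dmap (\<lambda>_. c) f = delta c"
proof
  fix b
  have "sum f (supp f) = 1" using assms unfolding Dist_def by auto
  then show "Dmap (\<lambda>_. c) f b = delta c b"
    unfolding Dmap_def delta_def by auto
qed

lemma Dmap_Dist:
  assumes "f \<in> Dist S" "\<And>a. a \<in> supp f \<Longrightarrow> \<phi> a \<in> T"
  shows "Dmap \<phi> f \<in> Dist T"
proof -
  have fin: "finite (supp f)" and nn: "\<And>a. 0 \<le> f a" and s1: "sum f (supp f) = 1"
    using assms(1) unfolding Dist_def by auto
  have sD: "supp (Dmap \<phi> f) \<subseteq> \<phi> ` supp f" by (rule supp_Dmap)
  have fi: "finite (\<phi> ` supp f)" using fin by simp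
  have "\<forall>b. 0 \<le> Dmap \<phi> f b" unfolding Dmap_def by (auto intro: sum_nonneg nn)
  moreover have "finite (supp (Dmap \<phi> f))"
    using fi sD by (rule finite_subset[rotated])
  moreover have "supp (Dmap \<phi> f) \<subseteq> T" using sD assms(2) by blast
  moreover have "sum (Dmap \<phi> f) (supp (Dmap \<phi> f)) = 1"
  proof -
    have "sum (Dmap \<phi> f) (supp (Dmap \<phi> f)) = sum (Dmap \<phi> f) (\<phi> ` supp f)"
      by (rule sum.mono_neutral_left[OF fi sD]) (simp add: supp_def)
    also have "\<dots> = (\<Sum>c\<in>\<phi> ` supp f. sum f {a. a \<in> supp f \<and> \<phi> a = c})"
      unfolding Dmap_def by simp
    also have "\<dots> = sum f (supp f)"
      by (rule sum.group[OF fin fi subset_refl])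
    finally show ?thesis using s1 by simp
  qed
  ultimately show ?thesis unfolding Dist_def by blast
qed

lemma Dist_snd:
  assumes "f \<in> Dist S" "Dmap snd f = delta y" "a \<in> supp f"
  shows "snd a = y"
proof (rule ccontr)
  assume ne: "snd a \<noteq> y"
  have fin: "finite (supp f)" and nn: "\<And>a. 0 \<le> f a"
    using assms(1) unfolding Dist_def by auto
  have "f a \<le> sum f {a' \<in> supp f. snd a' = snd a}"
    by (rule member_le_sum) (use fin nn assms(3) in auto)
  also have "\<dots> = Dmap snd f (snd a)" unfolding Dmap_def by simp
  also have "\<dots> = 0" using assms(2) ne by (simp add: delta_def)
  finally have "f a \<le> 0" .
  moreover have "f a \<noteq> 0" using assms(3) by (simp add: supp_def)
  ultimately show False using nn[of a] by simp
qed

lemma Dist_single: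
  assumes "f \<in> Dist S" "supp f \<subseteq> {a}"
  shows "f = delta a"
proof -
  have s1: "sum f (supp f) = 1" using assms(1) unfolding Dist_def by auto
  then have "supp f = {a}" using assms(2) by (cases "supp f = {}") auto
  then have "f a = 1" "\<And>x. x \<noteq> a \<Longrightarrow> f x = 0" using s1 unfolding supp_def by auto
  then show ?thesis unfolding delta_def by (auto intro!: ext)
qed

lemma Dmap_mix:
  assumes "finite (supp f)" "finite (supp g)"
  shows "Dmap \<phi> (\<lambda>e. t * f e + (1 - t) * g e) b = t * Dmap \<phi> f b + (1 - t) * Dmap \<phi> g b"
proof -
  let ?S = "supp f \<union> supp g"
  have fin: "finite ?S" using assms by auto
  have "Dmap \<phi> (\<lambda>e. t * f e + (1 - t) * g e) b = (\<Sum>a\<in>{a \<in> ?S. \<phi> a = b}. t * f a + (1 - t) * g a)"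
    by (rule Dmap_S[OF fin]) (auto simp: supp_def)
  also have "\<dots> = t * sum f {a \<in> ?S. \<phi> a = b} + (1 - t) * sum g {a \<in> ?S. \<phi> a = b}"
    unfolding sum.distrib sum_distrib_left[symmetric] ..
  also have "\<dots> = t * Dmap \<phi> f b + (1 - t) * Dmap \<phi> g b"
    using Dmap_S[OF fin, of f \<phi> b] Dmap_S[OF fin, of g \<phi> b] by auto
  finally show ?thesis .
qed

locale ssl =
  fixes Y :: "('a, 'b) sset_scheme"
  assumes ss: "is_sset Y"
begin

lemma fc_cells: "i \<le> Suc n \<Longrightarrow> x \<in> cells Y (Suc n) \<Longrightarrow> fc Y (Suc n) i x \<in> cells Y n"
  using ss[unfolded is_sset_def, THEN conjunct1] by blast

lemma dg_cells: "j \<le> n \<Longrightarrow> x \<in> cells Y n \<Longrightarrow> dg Y n j x \<in> cells Y (Suc n)"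
  using ss[unfolded is_sset_def, THEN conjunct2, THEN conjunct1] by blast

lemma ff: "i < j \<Longrightarrow> j \<le> Suc (Suc n) \<Longrightarrow> x \<in> cells Y (Suc (Suc n)) \<Longrightarrow>
  fc Y (Suc n) i (fc Y (Suc (Suc n)) j x) = fc Y (Suc n) (j - 1) (fc Y (Suc (Suc n)) i x)"
  using ss[unfolded is_sset_def, THEN conjunct2, THEN conjunct2, THEN conjunct1] by blast

lemma fd_lt: "i < j \<Longrightarrow> j \<le> n \<Longrightarrow> x \<in> cells Y n \<Longrightarrow>
  fc Y (Suc n) i (dg Y n j x) = dg Y (n - 1) (j - 1) (fc Y n i x)"
  using ss[unfolded is_sset_def, THEN conjunct2, THEN conjunct2, THEN conjunct2, THEN conjunct2, THEN conjunct1] by blast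

lemma fd_eq1: "j \<le> n \<Longrightarrow> x \<in> cells Y n \<Longrightarrow> fc Y (Suc n) j (dg Y n j x) = x"
  using ss[unfolded is_sset_def, THEN conjunct2, THEN conjunct2, THEN conjunct2, THEN conjunct2, THEN conjunct2, THEN conjunct1] by blast

lemma fd_eq2: "j \<le> n \<Longrightarrow> x \<in> cells Y n \<Longrightarrow> fc Y (Suc n) (Suc j) (dg Y n j x) = x"
  using ss[unfolded is_sset_def, THEN conjunct2, THEN conjunct2, THEN conjunct2, THEN conjunct2, THEN conjunct2, THEN conjunct1] by blast

lemma fd_gt: "Suc j < i \<Longrightarrow> i \<le> Suc n \<Longrightarrow> x \<in> cells Y n \<Longrightarrow>
  fc Y (Suc n) i (dg Y n j x) = dg Y (n - 1) j (fc Y n (i - 1) x)"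
  using ss[unfolded is_sset_def, THEN conjunct2, THEN conjunct2, THEN conjunct2, THEN conjunct2, THEN conjunct2, THEN conjunct2] by blast

lemma lf_cells: "k \<le> m \<Longrightarrow> y \<in> cells Y m \<Longrightarrow> lastfaces Y k m y \<in> cells Y (m - k)"
proof (induction k arbitrary: m y)
  case 0 then show ?case by simp
next
  case (Suc k)
  then obtain m' where m: "m = Suc m'" by (cases m) auto
  have y1: "fc Y m m y \<in> cells Y m'" using Suc.prems m fc_cells by simp
  have "lastfaces Y k m' (fc Y m m y) \<in> cells Y (m' - k)"
    using Suc.IH[OF _ y1] Suc.prems m by simp
  then show ?case using m by simp
qed

lemma lf_Suc: "k < m \<Longrightarrow> lastfaces Y (Suc k) m y = fc Y (m - k) (m - k) (lastfaces Y k m y)"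
proof (induction k arbitrary: m y)
  case 0 then show ?case by simp
next
  case (Suc k)
  have "lastfaces Y (Suc (Suc k)) m y = lastfaces Y (Suc k) (m - 1) (fc Y m m y)"
    by (simp only: lastfaces.simps)
  also have "\<dots> = fc Y (m - 1 - k) (m - 1 - k) (lastfaces Y k (m - 1) (fc Y m m y))"
    using Suc.IH[of "m - 1" "fc Y m m y"] Suc.prems by (simp del: lastfaces.simps)
  also have "lastfaces Y k (m - 1) (fc Y m m y) = lastfaces Y (Suc k) m y"
    by (simp only: lastfaces.simps)
  finally show ?case by (simp del: lastfaces.simps)
qed

lemma lf_face_lo: "k < m \<Longrightarrow> i \<le> m - k \<Longrightarrow> y \<in> cells Y m \<Longrightarrow>
  fc Y (m - k) i (lastfaces Y k m y) = lastfaces Y k (m - 1) (fc Y m i y)"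
proof (induction k arbitrary: m y)
  case 0 then show ?case by simp
next
  case (Suc k)
  define n where "n = m - 2"
  have m: "m = Suc (Suc n)" using Suc.prems unfolding n_def by arith
  have y1: "fc Y m m y \<in> cells Y (Suc n)" using fc_cells[of m "Suc n" y] Suc.prems m by simp
  have sw: "fc Y (Suc n) i (fc Y m m y) = fc Y (Suc n) (Suc n) (fc Y m i y)"
    using ff[of i m n y] Suc.prems m by simp
  have "fc Y (m - Suc k) i (lastfaces Y (Suc k) m y) = fc Y (Suc n - k) i (lastfaces Y k (Suc n) (fc Y m m y))"
    using m by simp
  also have "\<dots> = lastfaces Y k n (fc Y (Suc n) i (fc Y m m y))"
    using Suc.IH[of "Suc n" "fc Y m m y"] Suc.prems m y1 by simp
  also have "\<dots> = lastfaces Y (Suc k) (m - 1) (fc Y m i y)"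
    using sw m by simp
  finally show ?case .
qed

lemma lf_face_hi: "k < m \<Longrightarrow> m - k \<le> i \<Longrightarrow> i \<le> m \<Longrightarrow> y \<in> cells Y m \<Longrightarrow>
  lastfaces Y k (m - 1) (fc Y m i y) = lastfaces Y (Suc k) m y"
proof (induction k arbitrary: m i y)
  case 0 then show ?case by simp
next
  case (Suc k)
  define n where "n = m - 2"
  have m: "m = Suc (Suc n)" using Suc.prems unfolding n_def by arith
  show ?case
  proof (cases "i = m")
    case True then show ?thesis by simp
  next
    case False
    have y1: "fc Y m m y \<in> cells Y (Suc n)" using fc_cells[of m "Suc n" y] Suc.prems m by simp
    have sw: "fc Y (Suc n) (Suc n) (fc Y m i y) = fc Y (Suc n) i (fc Y m m y)"
      using ff[of i m n y] Suc.prems m False by simp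
    have "lastfaces Y (Suc k) (m - 1) (fc Y m i y) = lastfaces Y k n (fc Y (Suc n) (Suc n) (fc Y m i y))"
      using m by simp
    also have "\<dots> = lastfaces Y k (Suc n - 1) (fc Y (Suc n) i (fc Y m m y))" using sw by simp
    also have "\<dots> = lastfaces Y (Suc k) (Suc n) (fc Y m m y)"
      using Suc.IH[of "Suc n" i "fc Y m m y"] Suc.prems m y1 False by simp
    also have "\<dots> = lastfaces Y (Suc (Suc k)) m y" using m by simp
    finally show ?thesis .
  qed
qed

lemma lf_dg_lo: "k + j \<le> m \<Longrightarrow> y \<in> cells Y m \<Longrightarrow>
  lastfaces Y k (Suc m) (dg Y m j y) = dg Y (m - k) j (lastfaces Y k m y)"
proof (induction k arbitrary: m y)
  case 0 then show ?case by simp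
next
  case (Suc k)
  define n where "n = m - 1"
  have m: "m = Suc n" using Suc.prems unfolding n_def by arith
  have y1: "fc Y m m y \<in> cells Y n" using fc_cells[of m n y] Suc.prems m by simp
  have "fc Y (Suc m) (Suc m) (dg Y m j y) = dg Y n j (fc Y m m y)"
    using fd_gt[of j "Suc m" m y] Suc.prems m by simp
  then have "lastfaces Y (Suc k) (Suc m) (dg Y m j y) = lastfaces Y k (Suc n) (dg Y n j (fc Y m m y))"
    using m by simp
  also have "\<dots> = dg Y (n - k) j (lastfaces Y k n (fc Y m m y))"
    using Suc.IH[of n "fc Y m m y"] Suc.prems m y1 by simp
  finally show ?case using m by simp
qed

lemma lf_dg_hi: "1 \<le> k \<Longrightarrow> m < j + k \<Longrightarrow> j \<le> m \<Longrightarrow> y \<in> cells Y m \<Longrightarrow>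
  lastfaces Y k (Suc m) (dg Y m j y) = lastfaces Y (k - 1) m y"
proof (induction k arbitrary: m y)
  case 0 then show ?case by simp
next
  case (Suc k)
  show ?case
  proof (cases "j = m")
    case True
    then show ?thesis using fd_eq2[of m m y] Suc.prems by simp
  next
    case False
    define n where "n = m - 1"
    have m: "m = Suc n" using Suc.prems False unfolding n_def by arith
    have y1: "fc Y m m y \<in> cells Y n" using fc_cells[of m n y] Suc.prems m by simp
    have k1: "1 \<le> k" using Suc.prems False by simp
    have "fc Y (Suc m) (Suc m) (dg Y m j y) = dg Y n j (fc Y m m y)"
      using fd_gt[of j "Suc m" m y] Suc.prems m False by simp
    then have "lastfaces Y (Suc k) (Suc m) (dg Y m j y) = lastfaces Y k (Suc n) (dg Y n j (fc Y m m y))"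
      using m by simp
    also have "\<dots> = lastfaces Y (k - 1) n (fc Y m m y)"
      using Suc.IH[of n "fc Y m m y"] Suc.prems m y1 k1 False by simp
    also have "\<dots> = lastfaces Y k m y" using m k1 by (cases k) auto
    finally show ?thesis by simp
  qed
qed

end

lemma eta_len: "length (eta Y \<gamma> n y) = n - 1"
  by (induction Y \<gamma> n y rule: eta.induct) auto

lemma map2_add_diff:
  fixes a b c d :: "'h::ab_group_add list"
  assumes "length a = n" "length b = n" "length c = n" "length d = n"
  shows "map2 (-) (map2 (+) a b) (map2 (+) c d) = map2 (+) (map2 (-) a c) (map2 (-) b d)"
  by (rule nth_equalityI) (use assms in auto)

lemma eta_add: "eta Y (\<lambda>z. \<gamma>1 z + \<gamma>2 z) n y = map2 (+) (eta Y \<gamma>1 n y) (eta Y \<gamma>2 n y)"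
proof (induction Y "\<lambda>z. \<gamma>1 z + \<gamma>2 z" n y rule: eta.induct)
  case (3 Y n y)
  show ?case
    by (simp only: eta.simps 3 list.map zip_Cons_Cons prod.case)
       (simp add: map2_add_diff[where n = n] eta_len)
qed auto

context ssl
begin

lemma eta_cong: "(\<forall>z\<in>cells Y 2. \<gamma> z = \<gamma>' z) \<Longrightarrow> y \<in> cells Y n \<Longrightarrow> eta Y \<gamma> n y = eta Y \<gamma>' n y"
proof (induction n arbitrary: y rule: less_induct)
  case (less n)
  show ?case
  proof (cases n)
    case (Suc n1)
    show ?thesis
    proof (cases n1)
      case (Suc n2)
      have l: "lastfaces Y n2 (Suc (Suc n2)) y \<in> cells Y 2"
        using lf_cells[of n2 "Suc (Suc n2)" y] less.prems Suc \<open>n = Suc n1\<close> by simp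
      have y1: "fc Y (Suc (Suc n2)) 1 y \<in> cells Y (Suc n2)" "fc Y (Suc (Suc n2)) 0 y \<in> cells Y (Suc n2)"
        using fc_cells[of _ "Suc n2" y] less.prems Suc \<open>n = Suc n1\<close> by auto
      show ?thesis using less.IH[of "Suc n2"] less.prems l y1 Suc \<open>n = Suc n1\<close> by simp
    qed (simp add: \<open>n = Suc n1\<close>)
  qed simp
qed

lemma lf_smap:
  assumes "smap Y W f" "k \<le> m" "y \<in> cells Y m"
  shows "f (m - k) (lastfaces Y k m y) = lastfaces W k m (f m y)"
  using assms(2,3)
proof (induction k arbitrary: m y)
  case 0 then show ?case by simp
next
  case (Suc k)
  define n where "n = m - 1"
  have m: "m = Suc n" using Suc.prems unfolding n_def by arith
  have y1: "fc Y m m y \<in> cells Y n" using fc_cells[of m n y] Suc.prems m by simp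
  have fm: "f n (fc Y m m y) = fc W m m (f m y)"
    using assms(1)[unfolded smap_def, THEN conjunct2, THEN conjunct1] Suc.prems m by blast
  have "f (m - Suc k) (lastfaces Y (Suc k) m y) = f (n - k) (lastfaces Y k n (fc Y m m y))"
    using m by simp
  also have "\<dots> = lastfaces W k n (f n (fc Y m m y))"
    using Suc.IH[OF _ y1] Suc.prems m by simp
  also have "\<dots> = lastfaces W (Suc k) m (f m y)" using fm m by simp
  finally show ?case .
qed

lemma eta_pull:
  assumes "smap Y W f" "\<forall>z\<in>cells Y 2. \<gamma> z = \<gamma>' (f 2 z)" "y \<in> cells Y n"
  shows "eta Y \<gamma> n y = eta W \<gamma>' n (f n y)"
  using assms(3)
proof (induction n arbitrary: y rule: less_induct)
  case (less n)
  show ?case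
  proof (cases n)
    case (Suc n1)
    show ?thesis
    proof (cases n1)
      case (Suc n2)
      have nn: "n = Suc (Suc n2)" using Suc \<open>n = Suc n1\<close> by simp
      have l: "lastfaces Y n2 (Suc (Suc n2)) y \<in> cells Y 2"
        using lf_cells[of n2 "Suc (Suc n2)" y] less.prems nn by simp
      have fl: "f 2 (lastfaces Y n2 (Suc (Suc n2)) y) = lastfaces W n2 (Suc (Suc n2)) (f (Suc (Suc n2)) y)"
        using lf_smap[OF assms(1), of n2 "Suc (Suc n2)" y] less.prems nn by simp
      have y1: "fc Y (Suc (Suc n2)) i y \<in> cells Y (Suc n2)" if "i \<le> 1" for i
        using fc_cells[of i "Suc n2" y] less.prems nn that by auto
      have ff1: "f (Suc n2) (fc Y (Suc (Suc n2)) i y) = fc W (Suc (Suc n2)) i (f (Suc (Suc n2)) y)" if "i \<le> 1" for i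
        using assms(1)[unfolded smap_def, THEN conjunct2, THEN conjunct1] less.prems nn that by auto
      have i1: "eta Y \<gamma> (Suc n2) (fc Y (Suc (Suc n2)) i y) = eta W \<gamma>' (Suc n2) (fc W (Suc (Suc n2)) i (f (Suc (Suc n2)) y))" if "i \<le> 1" for i
        using less.IH[of "Suc n2", OF _ y1[OF that]] ff1[OF that] nn by simp
      show ?thesis
        unfolding nn eta.simps using i1[of 0] i1[of 1] assms(2) l fl by simp
    qed (simp add: \<open>n = Suc n1\<close>)
  qed simp
qed

end

locale cocy = ssl +
  fixes \<gamma> :: "'a \<Rightarrow> 'h::ab_group_add"
  assumes cy: "normalized_2cocycle Y \<gamma>"
begin

lemma gnorm: "j \<le> 1 \<Longrightarrow> x \<in> cells Y 1 \<Longrightarrow> \<gamma> (dg Y 1 j x) = 0"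
  using cy unfolding normalized_2cocycle_def normalized_cochain_def by auto

lemma gcyc: "x \<in> cells Y 3 \<Longrightarrow> \<gamma> (fc Y 3 0 x) - \<gamma> (fc Y 3 1 x) + \<gamma> (fc Y 3 2 x) - \<gamma> (fc Y 3 3 x) = 0"
  using cy unfolding normalized_2cocycle_def cobdry2_def by auto

end

lemma map2_diff_cancel:
  fixes a b c :: "'h::ab_group_add list"
  assumes "length a = n" "length b = n" "length c = n"
  shows "map2 (-) (map2 (-) a b) (map2 (-) c b) = map2 (-) a c"
  by (rule nth_equalityI) (use assms in auto)

context cocy
begin

lemma eta_face:
  assumes "1 \<le> i" "i \<le> n" "y \<in> cells Y (Suc n)"
  shows "nerve_face n i (eta Y \<gamma> (Suc n) y) = eta Y \<gamma> n (fc Y (Suc n) (Suc i) y)"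
  using assms
proof (induction n arbitrary: i y)
  case 0 then show ?case by simp
next
  case (Suc m)
  show ?case
  proof (cases m)
    case 0
    then have "i = 1" using Suc.prems by simp
    then show ?thesis using 0 by (simp add: nerve_face_def)
  next
    case (Suc m')
    note mm = Suc
    let ?N = "Suc (Suc (Suc m'))"
    have y: "y \<in> cells Y ?N" using Suc.prems mm by simp
    have cells1: "fc Y ?N k y \<in> cells Y (Suc (Suc m'))" if "k \<le> ?N" for k
      using fc_cells[of k "Suc (Suc m')" y] y that by simp
    have E: "eta Y \<gamma> ?N y = \<gamma> (lastfaces Y (Suc m') ?N y) #
        map2 (-) (eta Y \<gamma> (Suc (Suc m')) (fc Y ?N 1 y)) (eta Y \<gamma> (Suc (Suc m')) (fc Y ?N 0 y))"
      by (simp only: eta.simps)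
    have E2: "eta Y \<gamma> (Suc (Suc m')) z = \<gamma> (lastfaces Y m' (Suc (Suc m')) z) #
        map2 (-) (eta Y \<gamma> (Suc m') (fc Y (Suc (Suc m')) 1 z)) (eta Y \<gamma> (Suc m') (fc Y (Suc (Suc m')) 0 z))" for z
      by (simp only: eta.simps)
    have len: "length (eta Y \<gamma> k z) = k - 1" for k z by (rule eta_len)
    show ?thesis
    proof (cases "i = 1")
      case True
      have d12: "fc Y (Suc (Suc m')) 1 (fc Y ?N 2 y) = fc Y (Suc (Suc m')) 1 (fc Y ?N 1 y)"
        using ff[of 1 2 "Suc m'" y] y by simp
      have d02: "fc Y (Suc (Suc m')) 0 (fc Y ?N 2 y) = fc Y (Suc (Suc m')) 1 (fc Y ?N 0 y)"
        using ff[of 0 2 "Suc m'" y] y by simp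
      have d01: "fc Y (Suc (Suc m')) 0 (fc Y ?N 1 y) = fc Y (Suc (Suc m')) 0 (fc Y ?N 0 y)"
        using ff[of 0 1 "Suc m'" y] y by simp
      define w where "w = lastfaces Y m' ?N y"
      have w3: "w \<in> cells Y 3" using lf_cells[of m' ?N y] y unfolding w_def by simp
      have wf: "fc Y 3 k w = lastfaces Y m' (Suc (Suc m')) (fc Y ?N k y)" if "k \<le> 3" for k
        using lf_face_lo[of m' ?N k y] y that unfolding w_def by simp
      have w3': "fc Y 3 3 w = lastfaces Y (Suc m') ?N y"
        using lf_Suc[of m' ?N y] unfolding w_def by simp
      have cyc: "\<gamma> (lastfaces Y (Suc m') ?N y) + \<gamma> (lastfaces Y m' (Suc (Suc m')) (fc Y ?N 1 y))
          - \<gamma> (lastfaces Y m' (Suc (Suc m')) (fc Y ?N 0 y)) = \<gamma> (lastfaces Y m' (Suc (Suc m')) (fc Y ?N 2 y))"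
        using gcyc[OF w3] wf[of 0] wf[of 1] wf[of 2] w3' by (simp add: algebra_simps)
      have lhs: "nerve_face (Suc (Suc m')) 1 (eta Y \<gamma> ?N y) =
         (\<gamma> (lastfaces Y (Suc m') ?N y) + (\<gamma> (lastfaces Y m' (Suc (Suc m')) (fc Y ?N 1 y))
          - \<gamma> (lastfaces Y m' (Suc (Suc m')) (fc Y ?N 0 y)))) #
         map2 (-) (map2 (-) (eta Y \<gamma> (Suc m') (fc Y (Suc (Suc m')) 1 (fc Y ?N 1 y))) (eta Y \<gamma> (Suc m') (fc Y (Suc (Suc m')) 0 (fc Y ?N 1 y))))
                  (map2 (-) (eta Y \<gamma> (Suc m') (fc Y (Suc (Suc m')) 1 (fc Y ?N 0 y))) (eta Y \<gamma> (Suc m') (fc Y (Suc (Suc m')) 0 (fc Y ?N 0 y))))"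
        unfolding E by (subst nf_cons1) (simp_all only: E2 list.map zip_Cons_Cons prod.case list.sel len length_map length_zip, simp_all add: len)
      have rhs: "eta Y \<gamma> (Suc (Suc m')) (fc Y ?N 2 y) = \<gamma> (lastfaces Y m' (Suc (Suc m')) (fc Y ?N 2 y)) #
         map2 (-) (eta Y \<gamma> (Suc m') (fc Y (Suc (Suc m')) 1 (fc Y ?N 1 y))) (eta Y \<gamma> (Suc m') (fc Y (Suc (Suc m')) 1 (fc Y ?N 0 y)))"
        unfolding E2 d12 d02 ..
      have tl: "map2 (-) (map2 (-) (eta Y \<gamma> (Suc m') (fc Y (Suc (Suc m')) 1 (fc Y ?N 1 y))) (eta Y \<gamma> (Suc m') (fc Y (Suc (Suc m')) 0 (fc Y ?N 1 y))))
                  (map2 (-) (eta Y \<gamma> (Suc m') (fc Y (Suc (Suc m')) 1 (fc Y ?N 0 y))) (eta Y \<gamma> (Suc m') (fc Y (Suc (Suc m')) 0 (fc Y ?N 0 y))))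
          = map2 (-) (eta Y \<gamma> (Suc m') (fc Y (Suc (Suc m')) 1 (fc Y ?N 1 y))) (eta Y \<gamma> (Suc m') (fc Y (Suc (Suc m')) 1 (fc Y ?N 0 y)))"
        unfolding d01 by (rule map2_diff_cancel[where n = m']) (simp_all add: len)
      have goal: "nerve_face (Suc (Suc m')) 1 (eta Y \<gamma> ?N y) = eta Y \<gamma> (Suc (Suc m')) (fc Y ?N 2 y)"
        unfolding lhs rhs list.inject tl using cyc by (simp add: algebra_simps)
      show ?thesis using goal True mm by (simp del: eta.simps lastfaces.simps add: numeral_2_eq_2)
    next
      case False
      then have i2: "2 \<le> i" using Suc.prems by simp
      have d1: "fc Y (Suc (Suc m')) 1 (fc Y ?N (Suc i) y) = fc Y (Suc (Suc m')) i (fc Y ?N 1 y)"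
        using ff[of 1 "Suc i" "Suc m'" y] y Suc.prems mm i2 by simp
      have d0: "fc Y (Suc (Suc m')) 0 (fc Y ?N (Suc i) y) = fc Y (Suc (Suc m')) i (fc Y ?N 0 y)"
        using ff[of 0 "Suc i" "Suc m'" y] y Suc.prems mm i2 by simp
      have lf: "lastfaces Y m' (Suc (Suc m')) (fc Y ?N (Suc i) y) = lastfaces Y (Suc m') ?N y"
        using lf_face_hi[of m' ?N "Suc i" y] y Suc.prems mm i2 by simp
      have ih: "nerve_face (Suc m') (i - 1) (eta Y \<gamma> (Suc (Suc m')) (fc Y ?N k y)) =
                eta Y \<gamma> (Suc m') (fc Y (Suc (Suc m')) i (fc Y ?N k y))" if "k \<le> 1" for k
        using Suc.IH[of "i - 1" "fc Y ?N k y"] cells1[of k] that Suc.prems mm i2 by simp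
      have "nerve_face (Suc (Suc m')) i (eta Y \<gamma> ?N y) =
            \<gamma> (lastfaces Y (Suc m') ?N y) # nerve_face (Suc m') (i - 1)
              (map2 (-) (eta Y \<gamma> (Suc (Suc m')) (fc Y ?N 1 y)) (eta Y \<gamma> (Suc (Suc m')) (fc Y ?N 0 y)))"
        unfolding E by (rule nf_cons) (use Suc.prems mm i2 in \<open>simp_all add: len\<close>)
      also have "\<dots> = \<gamma> (lastfaces Y (Suc m') ?N y) #
          map2 (-) (eta Y \<gamma> (Suc m') (fc Y (Suc (Suc m')) i (fc Y ?N 1 y))) (eta Y \<gamma> (Suc m') (fc Y (Suc (Suc m')) i (fc Y ?N 0 y)))"
        using nf_map2_diff[of "eta Y \<gamma> (Suc (Suc m')) (fc Y ?N 1 y)" m' "eta Y \<gamma> (Suc (Suc m')) (fc Y ?N 0 y)" "i - 1"]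
          ih[of 0] ih[of 1] Suc.prems mm i2 by (simp add: len)
      also have "\<dots> = eta Y \<gamma> (Suc (Suc m')) (fc Y ?N (Suc i) y)"
        unfolding E2 d1 d0 lf ..
      finally show ?thesis using mm by simp
    qed
  qed
qed


lemma eta_degen:
  assumes "j \<le> n" "y \<in> cells Y n"
  shows "eta Y \<gamma> (Suc n) (dg Y n j y) = (if j = 0 then replicate n 0 else nerve_degen (j - 1) (eta Y \<gamma> n y))"
  using assms
proof (induction n arbitrary: j y)
  case 0 then show ?case by simp
next
  case (Suc m)
  have len: "length (eta Y \<gamma> k z) = k - 1" for k z by (rule eta_len)
  have E: "eta Y \<gamma> (Suc (Suc m)) (dg Y (Suc m) j y) = \<gamma> (lastfaces Y m (Suc (Suc m)) (dg Y (Suc m) j y)) #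
        map2 (-) (eta Y \<gamma> (Suc m) (fc Y (Suc (Suc m)) 1 (dg Y (Suc m) j y))) (eta Y \<gamma> (Suc m) (fc Y (Suc (Suc m)) 0 (dg Y (Suc m) j y)))"
    by (simp only: eta.simps)
  have lfc: "lastfaces Y m (Suc m) y \<in> cells Y 1"
    using lf_cells[of m "Suc m" y] Suc.prems by simp
  show ?case
  proof (cases "j \<le> 1")
    case True
    have lf: "lastfaces Y m (Suc (Suc m)) (dg Y (Suc m) j y) = dg Y 1 j (lastfaces Y m (Suc m) y)"
      using lf_dg_lo[of m j "Suc m" y] Suc.prems True by simp
    have g0: "\<gamma> (lastfaces Y m (Suc (Suc m)) (dg Y (Suc m) j y)) = 0"
      unfolding lf using gnorm[OF True lfc] .
    show ?thesis
    proof (cases "j = 0")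
      case True
      have f1: "fc Y (Suc (Suc m)) 1 (dg Y (Suc m) 0 y) = y" using fd_eq2[of 0 "Suc m" y] Suc.prems by simp
      have f0: "fc Y (Suc (Suc m)) 0 (dg Y (Suc m) 0 y) = y" using fd_eq1[of 0 "Suc m" y] Suc.prems by simp
      show ?thesis unfolding E using g0 f1 f0 True
        by (intro nth_equalityI) (auto simp: len nth_Cons')
    next
      case False
      then have j1: "j = 1" using True by simp
      have f1: "fc Y (Suc (Suc m)) 1 (dg Y (Suc m) 1 y) = y" using fd_eq1[of 1 "Suc m" y] Suc.prems j1 by simp
      have f0: "fc Y (Suc (Suc m)) 0 (dg Y (Suc m) 1 y) = dg Y m 0 (fc Y (Suc m) 0 y)"
        using fd_lt[of 0 1 "Suc m" y] Suc.prems j1 by simp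
      have c0: "fc Y (Suc m) 0 y \<in> cells Y m" using fc_cells[of 0 m y] Suc.prems by simp
      have ih: "eta Y \<gamma> (Suc m) (dg Y m 0 (fc Y (Suc m) 0 y)) = replicate m 0"
        using Suc.IH[of 0, OF _ c0] by simp
      show ?thesis unfolding E using g0 f1 f0 j1 ih
        by (intro nth_equalityI) (auto simp: len nth_Cons' nd0)
    qed
  next
    case False
    then have j2: "2 \<le> j" by simp
    obtain m' where mm: "m = Suc m'" using Suc.prems j2 by (cases m) auto
    have lf: "lastfaces Y m (Suc (Suc m)) (dg Y (Suc m) j y) = lastfaces Y m' (Suc m) y"
      using lf_dg_hi[of m "Suc m" j y] Suc.prems j2 mm by simp
    have f1: "fc Y (Suc (Suc m)) k (dg Y (Suc m) j y) = dg Y m (j - 1) (fc Y (Suc m) k y)" if "k \<le> 1" for k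
      using fd_lt[of k j "Suc m" y] Suc.prems j2 that by simp
    have ck: "fc Y (Suc m) k y \<in> cells Y m" if "k \<le> 1" for k using fc_cells[of k m y] Suc.prems that by simp
    have ih: "eta Y \<gamma> (Suc m) (dg Y m (j - 1) (fc Y (Suc m) k y)) = nerve_degen (j - 2) (eta Y \<gamma> m (fc Y (Suc m) k y))"
      if "k \<le> 1" for k
      using Suc.IH[of "j - 1", OF _ ck[OF that]] Suc.prems j2 by (simp add: numeral_2_eq_2)
    have E': "eta Y \<gamma> (Suc m) y = \<gamma> (lastfaces Y m' (Suc m) y) #
        map2 (-) (eta Y \<gamma> m (fc Y (Suc m) 1 y)) (eta Y \<gamma> m (fc Y (Suc m) 0 y))"
      unfolding mm by (simp only: eta.simps)
    have "eta Y \<gamma> (Suc (Suc m)) (dg Y (Suc m) j y) = \<gamma> (lastfaces Y m' (Suc m) y) #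
        map2 (-) (nerve_degen (j - 2) (eta Y \<gamma> m (fc Y (Suc m) 1 y))) (nerve_degen (j - 2) (eta Y \<gamma> m (fc Y (Suc m) 0 y)))"
      unfolding E lf using f1[of 0] f1[of 1] ih[of 0] ih[of 1] by simp
    also have "\<dots> = \<gamma> (lastfaces Y m' (Suc m) y) #
        nerve_degen (j - 2) (map2 (-) (eta Y \<gamma> m (fc Y (Suc m) 1 y)) (eta Y \<gamma> m (fc Y (Suc m) 0 y)))"
      using nd_map2_diff[of "eta Y \<gamma> m (fc Y (Suc m) 1 y)" m' "eta Y \<gamma> m (fc Y (Suc m) 0 y)" "j - 2"] Suc.prems mm j2
      by (simp add: len)
    also have "\<dots> = nerve_degen (j - 1) (eta Y \<gamma> (Suc m) y)"
    proof -
      have "1 \<le> j - 1" using j2 by simp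
      then show ?thesis unfolding E' nd_cons[OF \<open>1 \<le> j - 1\<close>] by (simp add: numeral_2_eq_2)
    qed
    finally show ?thesis using j2 by simp
  qed
qed

end

fun cc :: "('a, 'b) sset_scheme \<Rightarrow> ('a \<Rightarrow> 'h::ab_group_add) \<Rightarrow> nat \<Rightarrow> 'a \<Rightarrow> 'h list" where
  "cc Y \<mu> 0 y = []"
| "cc Y \<mu> (Suc n) y = \<mu> (lastfaces Y n (Suc n) y) #
     map2 (-) (cc Y \<mu> n (fc Y (Suc n) 0 y)) (eta Y (cobdry1 Y \<mu>) (Suc n) y)"

lemma map2_diff_zero: "length l = n \<Longrightarrow> map2 (-) l (replicate n (0::'h::ab_group_add)) = l"
  by (rule nth_equalityI) auto

lemma cc_len: "length (cc Y \<mu> n y) = n"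
  by (induction n arbitrary: y) (auto simp: eta_len)

context ssl
begin

lemma cc_cong: "(\<forall>z\<in>cells Y 1. \<mu> z = \<mu>' z) \<Longrightarrow> y \<in> cells Y n \<Longrightarrow> cc Y \<mu> n y = cc Y \<mu>' n y"
proof (induction n arbitrary: y)
  case 0 then show ?case by simp
next
  case (Suc n)
  have c2: "\<forall>z\<in>cells Y 2. cobdry1 Y \<mu> z = cobdry1 Y \<mu>' z"
  proof
    fix z assume z: "z \<in> cells Y 2"
    have "fc Y 2 k z \<in> cells Y 1" if "k \<le> 2" for k using fc_cells[of k 1 z] z that by (simp add: numeral_2_eq_2)
    then show "cobdry1 Y \<mu> z = cobdry1 Y \<mu>' z" unfolding cobdry1_def using Suc.prems(1) by simp
  qed
  have l: "lastfaces Y n (Suc n) y \<in> cells Y 1" using lf_cells[of n "Suc n" y] Suc.prems by simp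
  have c0: "fc Y (Suc n) 0 y \<in> cells Y n" using fc_cells[of 0 n y] Suc.prems by simp
  show ?case using Suc.IH[OF Suc.prems(1) c0] eta_cong[OF c2 Suc.prems(2)] l Suc.prems(1) by simp
qed

end

locale cob = ssl +
  fixes \<mu> :: "'a \<Rightarrow> 'h::ab_group_add"
  assumes nmu: "normalized_cochain Y 1 \<mu>"
begin

lemma mnorm: "x \<in> cells Y 0 \<Longrightarrow> \<mu> (dg Y 0 0 x) = 0"
  using nmu unfolding normalized_cochain_def by auto

lemma cobdry_cocycle: "normalized_2cocycle Y (cobdry1 Y \<mu>)"
proof -
  have "cobdry1 Y \<mu> (dg Y 1 j x) = 0" if "j \<le> 1" "x \<in> cells Y 1" for j x
  proof (cases j)
    case 0
    have "fc Y 2 0 (dg Y 1 0 x) = x" using fd_eq1[of 0 1 x] that by (simp add: numeral_2_eq_2)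
    moreover have "fc Y 2 1 (dg Y 1 0 x) = x" using fd_eq2[of 0 1 x] that by (simp add: numeral_2_eq_2)
    moreover have "fc Y 2 2 (dg Y 1 0 x) = dg Y 0 0 (fc Y 1 1 x)" using fd_gt[of 0 2 1 x] that by (simp add: numeral_2_eq_2)
    moreover have "fc Y 1 1 x \<in> cells Y 0" using fc_cells[of 1 0 x] that by simp
    ultimately show ?thesis unfolding cobdry1_def 0 using mnorm by simp
  next
    case (Suc j')
    then have j: "j = 1" using that by simp
    have "fc Y 2 1 (dg Y 1 1 x) = x" using fd_eq1[of 1 1 x] that by (simp add: numeral_2_eq_2)
    moreover have "fc Y 2 2 (dg Y 1 1 x) = x" using fd_eq2[of 1 1 x] that by (simp add: numeral_2_eq_2)
    moreover have "fc Y 2 0 (dg Y 1 1 x) = dg Y 0 0 (fc Y 1 0 x)" using fd_lt[of 0 1 1 x] that by (simp add: numeral_2_eq_2)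
    moreover have "fc Y 1 0 x \<in> cells Y 0" using fc_cells[of 0 0 x] that by simp
    ultimately show ?thesis unfolding cobdry1_def j using mnorm by simp
  qed
  then have nc: "normalized_cochain Y 2 (cobdry1 Y \<mu>)"
    unfolding normalized_cochain_def by (auto simp: numeral_2_eq_2)
  have "cobdry2 Y (cobdry1 Y \<mu>) x = 0" if x: "x \<in> cells Y 3" for x
  proof -
    have x': "x \<in> cells Y (Suc (Suc 1))" using x by (simp add: numeral_3_eq_3)
    have e: "fc Y 2 i (fc Y 3 j x) = fc Y 2 (j - 1) (fc Y 3 i x)" if "i < j" "j \<le> 3" for i j
      using ff[of i j 1 x] x' that by (simp add: numeral_2_eq_2 numeral_3_eq_3)
    have e01: "fc Y 2 0 (fc Y 3 1 x) = fc Y 2 0 (fc Y 3 0 x)" using e[of 0 1] by simp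
    have e02: "fc Y 2 0 (fc Y 3 2 x) = fc Y 2 1 (fc Y 3 0 x)" using e[of 0 2] by simp
    have e03: "fc Y 2 0 (fc Y 3 3 x) = fc Y 2 2 (fc Y 3 0 x)" using e[of 0 3] by simp
    have e12: "fc Y 2 1 (fc Y 3 2 x) = fc Y 2 1 (fc Y 3 1 x)" using e[of 1 2] by simp
    have e13: "fc Y 2 1 (fc Y 3 3 x) = fc Y 2 2 (fc Y 3 1 x)" using e[of 1 3] by simp
    have e23: "fc Y 2 2 (fc Y 3 3 x) = fc Y 2 2 (fc Y 3 2 x)" using e[of 2 3] by simp
    show ?thesis unfolding cobdry2_def cobdry1_def e01 e02 e03 e12 e13 e23 by (simp add: algebra_simps)
  qed
  then show ?thesis using nc unfolding normalized_2cocycle_def by auto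
qed

sublocale cocy Y "cobdry1 Y \<mu>"
  by (unfold_locales) (rule cobdry_cocycle)


abbreviation "\<Gamma> \<equiv> cobdry1 Y \<mu>"

lemma cc_sec0:
  assumes "y \<in> cells Y (Suc n)"
  shows "map2 (+) (tl (cc Y \<mu> (Suc n) y)) (eta Y \<Gamma> (Suc n) y) = cc Y \<mu> n (fc Y (Suc n) 0 y)"
  by (rule nth_equalityI) (auto simp: cc_len eta_len)

lemma cc_face:
  assumes "1 \<le> i" "i \<le> Suc n" "y \<in> cells Y (Suc n)"
  shows "nerve_face (Suc n) i (cc Y \<mu> (Suc n) y) = cc Y \<mu> n (fc Y (Suc n) i y)"
  using assms
proof (induction n arbitrary: i y)
  case 0
  then have "i = 1" by simp
  then show ?case by (simp add: nerve_face_def)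
next
  case (Suc m)
  let ?N = "Suc (Suc m)"
  have y: "y \<in> cells Y ?N" using Suc.prems by simp
  have lenE: "length (eta Y g k z) = k - 1" for g k z by (rule eta_len)
  have lenC: "length (cc Y \<mu> k z) = k" for k z by (rule cc_len)
  have C: "cc Y \<mu> ?N y = \<mu> (lastfaces Y (Suc m) ?N y) # map2 (-) (cc Y \<mu> (Suc m) (fc Y ?N 0 y)) (eta Y \<Gamma> ?N y)"
    by (simp only: cc.simps)
  have C1: "cc Y \<mu> (Suc m) z = \<mu> (lastfaces Y m (Suc m) z) # map2 (-) (cc Y \<mu> m (fc Y (Suc m) 0 z)) (eta Y \<Gamma> (Suc m) z)" for z
    by (simp only: cc.simps)
  have E: "eta Y \<Gamma> ?N y = \<Gamma> (lastfaces Y m ?N y) # map2 (-) (eta Y \<Gamma> (Suc m) (fc Y ?N 1 y)) (eta Y \<Gamma> (Suc m) (fc Y ?N 0 y))"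
    by (simp only: eta.simps)
  show ?case
  proof (cases "i = 1")
    case True
    define w where "w = lastfaces Y m ?N y"
    have w2: "w \<in> cells Y 2" using lf_cells[of m ?N y] y unfolding w_def by simp
    have wf: "fc Y 2 k w = lastfaces Y m (Suc m) (fc Y ?N k y)" if "k \<le> 2" for k
      using lf_face_lo[of m ?N k y] y that unfolding w_def by simp
    have w2': "fc Y 2 2 w = lastfaces Y (Suc m) ?N y"
      using lf_Suc[of m ?N y] unfolding w_def by simp
    have hd: "\<mu> (lastfaces Y (Suc m) ?N y) + (\<mu> (lastfaces Y m (Suc m) (fc Y ?N 0 y)) - \<Gamma> (lastfaces Y m ?N y))
       = \<mu> (lastfaces Y m (Suc m) (fc Y ?N 1 y))"
      using wf[of 0] wf[of 1] w2' unfolding w_def[symmetric] cobdry1_def by (simp add: algebra_simps)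
    have d01: "fc Y (Suc m) 0 (fc Y ?N 1 y) = fc Y (Suc m) 0 (fc Y ?N 0 y)"
      using ff[of 0 1 m y] y by simp
    have lhs: "nerve_face ?N 1 (cc Y \<mu> ?N y) =
       (\<mu> (lastfaces Y (Suc m) ?N y) + (\<mu> (lastfaces Y m (Suc m) (fc Y ?N 0 y)) - \<Gamma> (lastfaces Y m ?N y))) #
       map2 (-) (map2 (-) (cc Y \<mu> m (fc Y (Suc m) 0 (fc Y ?N 0 y))) (eta Y \<Gamma> (Suc m) (fc Y ?N 0 y)))
                (map2 (-) (eta Y \<Gamma> (Suc m) (fc Y ?N 1 y)) (eta Y \<Gamma> (Suc m) (fc Y ?N 0 y)))"
      unfolding C by (subst nf_cons1) (simp_all only: C1 E list.map zip_Cons_Cons prod.case list.sel lenE lenC length_map length_zip, simp_all add: lenE lenC)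
    have rhs: "cc Y \<mu> (Suc m) (fc Y ?N 1 y) = \<mu> (lastfaces Y m (Suc m) (fc Y ?N 1 y)) #
       map2 (-) (cc Y \<mu> m (fc Y (Suc m) 0 (fc Y ?N 0 y))) (eta Y \<Gamma> (Suc m) (fc Y ?N 1 y))"
      unfolding C1 d01 ..
    have tl: "map2 (-) (map2 (-) (cc Y \<mu> m (fc Y (Suc m) 0 (fc Y ?N 0 y))) (eta Y \<Gamma> (Suc m) (fc Y ?N 0 y)))
                (map2 (-) (eta Y \<Gamma> (Suc m) (fc Y ?N 1 y)) (eta Y \<Gamma> (Suc m) (fc Y ?N 0 y)))
         = map2 (-) (cc Y \<mu> m (fc Y (Suc m) 0 (fc Y ?N 0 y))) (eta Y \<Gamma> (Suc m) (fc Y ?N 1 y))"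
      by (rule nth_equalityI) (auto simp: lenE lenC)
    show ?thesis unfolding True lhs rhs list.inject tl hd by simp
  next
    case False
    then have i2: "2 \<le> i" using Suc.prems by simp
    have c0: "fc Y ?N 0 y \<in> cells Y (Suc m)" using fc_cells[of 0 "Suc m" y] y by simp
    have d0: "fc Y (Suc m) 0 (fc Y ?N i y) = fc Y (Suc m) (i - 1) (fc Y ?N 0 y)"
      using ff[of 0 i m y] y Suc.prems i2 by simp
    have lf: "lastfaces Y m (Suc m) (fc Y ?N i y) = lastfaces Y (Suc m) ?N y"
      using lf_face_hi[of m ?N i y] y Suc.prems i2 by simp
    have ih: "nerve_face (Suc m) (i - 1) (cc Y \<mu> (Suc m) (fc Y ?N 0 y)) = cc Y \<mu> m (fc Y (Suc m) (i - 1) (fc Y ?N 0 y))"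
      using Suc.IH[of "i - 1" "fc Y ?N 0 y"] c0 Suc.prems i2 by simp
    have ef: "nerve_face (Suc m) (i - 1) (eta Y \<Gamma> ?N y) = eta Y \<Gamma> (Suc m) (fc Y ?N i y)"
      using eta_face[of "i - 1" "Suc m" y] y Suc.prems i2 by simp
    have "nerve_face ?N i (cc Y \<mu> ?N y) = \<mu> (lastfaces Y (Suc m) ?N y) #
          nerve_face (Suc m) (i - 1) (map2 (-) (cc Y \<mu> (Suc m) (fc Y ?N 0 y)) (eta Y \<Gamma> ?N y))"
      unfolding C by (rule nf_cons) (use Suc.prems i2 in \<open>simp_all add: lenE lenC\<close>)
    also have "\<dots> = \<mu> (lastfaces Y (Suc m) ?N y) #
          map2 (-) (cc Y \<mu> m (fc Y (Suc m) (i - 1) (fc Y ?N 0 y))) (eta Y \<Gamma> (Suc m) (fc Y ?N i y))"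
      using nf_map2_diff[of "cc Y \<mu> (Suc m) (fc Y ?N 0 y)" m "eta Y \<Gamma> ?N y" "i - 1"] ih ef Suc.prems i2
      by (simp add: lenE lenC)
    also have "\<dots> = cc Y \<mu> (Suc m) (fc Y ?N i y)"
      unfolding C1 d0 lf ..
    finally show ?thesis .
  qed
qed

lemma cc_degen:
  assumes "j \<le> n" "y \<in> cells Y n"
  shows "cc Y \<mu> (Suc n) (dg Y n j y) = nerve_degen j (cc Y \<mu> n y)"
  using assms
proof (induction n arbitrary: j y)
  case 0
  then have j: "j = 0" by simp
  have "lastfaces Y 0 (Suc 0) (dg Y 0 0 y) = dg Y 0 0 y" by simp
  then show ?case using mnorm[OF 0(2)] j by (simp add: nerve_degen_def)
next
  case (Suc m)
  have lenE: "length (eta Y g k z) = k - 1" for g k z by (rule eta_len)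
  have lenC: "length (cc Y \<mu> k z) = k" for k z by (rule cc_len)
  have C: "cc Y \<mu> (Suc (Suc m)) (dg Y (Suc m) j y) = \<mu> (lastfaces Y (Suc m) (Suc (Suc m)) (dg Y (Suc m) j y)) #
     map2 (-) (cc Y \<mu> (Suc m) (fc Y (Suc (Suc m)) 0 (dg Y (Suc m) j y))) (eta Y \<Gamma> (Suc (Suc m)) (dg Y (Suc m) j y))"
    by (simp only: cc.simps)
  show ?case
  proof (cases "j = 0")
    case True
    have lf: "lastfaces Y (Suc m) (Suc (Suc m)) (dg Y (Suc m) 0 y) = dg Y 0 0 (lastfaces Y (Suc m) (Suc m) y)"
      using lf_dg_lo[of "Suc m" 0 "Suc m" y] Suc.prems by simp
    have l0: "lastfaces Y (Suc m) (Suc m) y \<in> cells Y 0" using lf_cells[of "Suc m" "Suc m" y] Suc.prems by simp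
    have f0: "fc Y (Suc (Suc m)) 0 (dg Y (Suc m) 0 y) = y" using fd_eq1[of 0 "Suc m" y] Suc.prems by simp
    have e: "eta Y \<Gamma> (Suc (Suc m)) (dg Y (Suc m) 0 y) = replicate (Suc m) 0"
      using eta_degen[of 0 "Suc m" y] Suc.prems by simp
    show ?thesis unfolding C unfolding True lf f0 e mnorm[OF l0]
      unfolding nd0 using map2_diff_zero[OF lenC[of "Suc m" y]] by (simp del: cc.simps replicate.simps)
  next
    case False
    have lf: "lastfaces Y (Suc m) (Suc (Suc m)) (dg Y (Suc m) j y) = lastfaces Y m (Suc m) y"
      using lf_dg_hi[of "Suc m" "Suc m" j y] Suc.prems False by simp
    have f0: "fc Y (Suc (Suc m)) 0 (dg Y (Suc m) j y) = dg Y m (j - 1) (fc Y (Suc m) 0 y)"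
      using fd_lt[of 0 j "Suc m" y] Suc.prems False by simp
    have c0: "fc Y (Suc m) 0 y \<in> cells Y m" using fc_cells[of 0 m y] Suc.prems by simp
    have ih: "cc Y \<mu> (Suc m) (dg Y m (j - 1) (fc Y (Suc m) 0 y)) = nerve_degen (j - 1) (cc Y \<mu> m (fc Y (Suc m) 0 y))"
      using Suc.IH[of "j - 1", OF _ c0] Suc.prems False by simp
    have e: "eta Y \<Gamma> (Suc (Suc m)) (dg Y (Suc m) j y) = nerve_degen (j - 1) (eta Y \<Gamma> (Suc m) y)"
      using eta_degen[of j "Suc m" y] Suc.prems False by simp
    have "cc Y \<mu> (Suc (Suc m)) (dg Y (Suc m) j y) = \<mu> (lastfaces Y m (Suc m) y) #
        nerve_degen (j - 1) (map2 (-) (cc Y \<mu> m (fc Y (Suc m) 0 y)) (eta Y \<Gamma> (Suc m) y))"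
      unfolding C lf f0 ih e
      using nd_map2_diff[of "cc Y \<mu> m (fc Y (Suc m) 0 y)" m "eta Y \<Gamma> (Suc m) y" "j - 1"] Suc.prems False
      by (simp add: lenE lenC)
    also have "\<dots> = nerve_degen j (cc Y \<mu> (Suc m) y)"
    proof -
      have j1: "1 \<le> j" using False by simp
      show ?thesis by (simp only: cc.simps nd_cons[OF j1])
    qed
    finally show ?thesis .
  qed
qed

end

lemma tw_cells: "cells (twisted Y \<gamma>) n = {(g, y). length g = n \<and> y \<in> cells Y n}"
  unfolding twisted_def by simp

lemma tw_fc: "fc (twisted Y \<gamma>) n i (g, y) =
   (if i = 0 then (map2 (+) (tl g) (eta Y \<gamma> n y), fc Y n 0 y) else (nerve_face n i g, fc Y n i y))"
  unfolding twisted_def by simp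

lemma tw_dg: "dg (twisted Y \<gamma>) n j (g, y) = (nerve_degen j g, dg Y n j y)"
  unfolding twisted_def by simp

lemma sdist_parts:
  assumes "sdist Y \<gamma> p"
  shows sd_cells: "\<And>n y. y \<in> cells Y n \<Longrightarrow> p n y \<in> Dist (cells (twisted Y \<gamma>) n)"
    and sd_face: "\<And>n i y. i \<le> Suc n \<Longrightarrow> y \<in> cells Y (Suc n) \<Longrightarrow>
        p n (fc Y (Suc n) i y) = Dmap (fc (twisted Y \<gamma>) (Suc n) i) (p (Suc n) y)"
    and sd_deg: "\<And>n j y. j \<le> n \<Longrightarrow> y \<in> cells Y n \<Longrightarrow>
        p (Suc n) (dg Y n j y) = Dmap (dg (twisted Y \<gamma>) n j) (p n y)"
    and sd_snd: "\<And>n y. y \<in> cells Y n \<Longrightarrow> Dmap snd (p n y) = delta y"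
    and sd_off: "\<And>n y. y \<notin> cells Y n \<Longrightarrow> p n y = (\<lambda>_. 0)"
  using assms unfolding sdist_def smap_def Dsset_def by auto

lemma sd_supp:
  assumes "sdist Y \<gamma> p" "y \<in> cells Y n" "a \<in> supp (p n y)"
  shows "a = (fst a, y) \<and> length (fst a) = n"
proof -
  have D: "p n y \<in> Dist (cells (twisted Y \<gamma>) n)" by (rule sd_cells[OF assms(1,2)])
  have "snd a = y" by (rule Dist_snd[OF D sd_snd[OF assms(1,2)] assms(3)])
  moreover have "a \<in> cells (twisted Y \<gamma>) n" using D assms(3) unfolding Dist_def by auto
  ultimately show ?thesis unfolding tw_cells by (cases a) auto
qed

lemma sdistI:
  assumes "\<And>n y. y \<in> cells Y n \<Longrightarrow> p n y \<in> Dist (cells (twisted Y \<gamma>) n)"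
    and "\<And>n i y. i \<le> Suc n \<Longrightarrow> y \<in> cells Y (Suc n) \<Longrightarrow>
        p n (fc Y (Suc n) i y) = Dmap (fc (twisted Y \<gamma>) (Suc n) i) (p (Suc n) y)"
    and "\<And>n j y. j \<le> n \<Longrightarrow> y \<in> cells Y n \<Longrightarrow>
        p (Suc n) (dg Y n j y) = Dmap (dg (twisted Y \<gamma>) n j) (p n y)"
    and "\<And>n y. y \<in> cells Y n \<Longrightarrow> Dmap snd (p n y) = delta y"
    and "\<And>n y. y \<notin> cells Y n \<Longrightarrow> p n y = (\<lambda>_. 0)"
  shows "sdist Y \<gamma> p"
  using assms unfolding sdist_def smap_def Dsset_def by auto

lemma restr_simps[simp]: "fc (restr X Z) = fc X" "dg (restr X Z) = dg X" "cells (restr X Z) = Z"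
  unfolding restr_def by simp_all

lemma lf_restr: "lastfaces (restr X Z) k m y = lastfaces X k m y"
  by (induction k arbitrary: m y) auto

lemma eta_restr: "eta (restr X Z) \<gamma> n y = eta X \<gamma> n y"
  by (induction X \<gamma> n y rule: eta.induct) (auto simp: lf_restr)

lemma cobdry1_restr: "cobdry1 (restr X Z) \<mu> = cobdry1 X \<mu>"
  unfolding cobdry1_def by simp

lemma cc_restr: "cc (restr X Z) \<mu> n y = cc X \<mu> n y"
  by (induction n arbitrary: y) (auto simp: eta_restr cobdry1_restr lf_restr)

lemma quot_cells: "cells (quot X Z) n = Some ` (cells X n - Z n) \<union> {None}"
  unfolding quot_def by simp

lemma quot_fc_None: "fc (quot X Z) n i None = None"
  unfolding quot_def by simp

lemma quot_dg_None: "dg (quot X Z) n j None = None"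
  unfolding quot_def by simp

lemma quot_fc_Some: "fc (quot X Z) n i (Some a) = (if fc X n i a \<in> Z (n - 1) then None else Some (fc X n i a))"
  unfolding quot_def by simp

lemma quot_dg_Some: "dg (quot X Z) n j (Some a) = Some (dg X n j a)"
  unfolding quot_def by simp

lemma lf_quot_None: "lastfaces (quot X Z) k m None = None"
  by (induction k arbitrary: m) (auto simp: quot_fc_None)

locale main =
  fixes X :: "'a sset" and Z :: "nat \<Rightarrow> 'a set"
    and \<alpha> :: "'a \<Rightarrow> 'h::ab_group_add" and \<nu> :: "'a \<Rightarrow> 'h"
    and \<beta> :: "'a option \<Rightarrow> 'h"
  assumes A1: "is_sset X"
    and A2: "is_subsset X Z"
    and A3: "normalized_2cocycle X \<alpha>"
    and A4: "normalized_cochain (restr X Z) 1 \<nu>"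
    and A5: "\<forall>z \<in> Z 2. cobdry1 (restr X Z) \<nu> z = \<alpha> z"
    and A6: "normalized_2cocycle (quot X Z) \<beta>"
    and A7: "\<forall>x \<in> cells X 2.
           \<beta> (qmap Z 2 x) = \<alpha> x - cobdry1 X (\<lambda>y. if y \<in> Z 1 then \<nu> y else 0) x"
begin

definition nt :: "'a \<Rightarrow> 'h" where "nt = (\<lambda>y. if y \<in> Z 1 then \<nu> y else 0)"

sublocale X: ssl X by unfold_locales (rule A1)

lemma Zsub: "Z n \<subseteq> cells X n"
  using A2 unfolding is_subsset_def by blast

lemma Zfc: "i \<le> Suc n \<Longrightarrow> x \<in> Z (Suc n) \<Longrightarrow> fc X (Suc n) i x \<in> Z n"
  using A2[unfolded is_subsset_def, THEN conjunct2, THEN conjunct1] by blast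

lemma Zdg: "j \<le> n \<Longrightarrow> x \<in> Z n \<Longrightarrow> dg X n j x \<in> Z (Suc n)"
  using A2[unfolded is_subsset_def, THEN conjunct2, THEN conjunct2] by blast

lemma Zdg_not: "j \<le> n \<Longrightarrow> x \<in> cells X n \<Longrightarrow> x \<notin> Z n \<Longrightarrow> dg X n j x \<notin> Z (Suc n)"
  using Zfc[of j n "dg X n j x"] X.fd_eq1[of j n x] by auto

lemma restr_sset: "is_sset (restr X Z)"
proof -
  have c: "cells (restr X Z) = Z" "fc (restr X Z) = fc X" "dg (restr X Z) = dg X"
    by simp_all
  have s: "\<And>x n. x \<in> Z n \<Longrightarrow> x \<in> cells X n" using Zsub by blast
  have dd: "\<And>n i j x. i \<le> j \<Longrightarrow> j \<le> n \<Longrightarrow> x \<in> cells X n \<Longrightarrow>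
        dg X (Suc n) i (dg X n j x) = dg X (Suc n) (Suc j) (dg X n i x)"
    using A1[unfolded is_sset_def, THEN conjunct2, THEN conjunct2, THEN conjunct2, THEN conjunct1] by blast
  show ?thesis unfolding is_sset_def c
  proof (intro conjI allI impI)
    show "fc X (Suc n) i x \<in> Z n" if "i \<le> Suc n" "x \<in> Z (Suc n)" for n i x using Zfc that by blast
    show "dg X n j x \<in> Z (Suc n)" if "j \<le> n" "x \<in> Z n" for n j x using Zdg that by blast
    show "fc X (Suc n) i (fc X (Suc (Suc n)) j x) = fc X (Suc n) (j - 1) (fc X (Suc (Suc n)) i x)"
      if "i < j" "j \<le> Suc (Suc n)" "x \<in> Z (Suc (Suc n))" for n i j x using X.ff that s by blast
    show "dg X (Suc n) i (dg X n j x) = dg X (Suc n) (Suc j) (dg X n i x)"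
      if "i \<le> j" "j \<le> n" "x \<in> Z n" for n i j x using dd that s by blast
    show "fc X (Suc n) i (dg X n j x) = dg X (n - 1) (j - 1) (fc X n i x)"
      if "i < j" "j \<le> n" "x \<in> Z n" for n i j x using X.fd_lt that s by blast
    show "fc X (Suc n) j (dg X n j x) = x"
      if "j \<le> n" "x \<in> Z n" for n j x using X.fd_eq1 that s by blast
    show "fc X (Suc n) (Suc j) (dg X n j x) = x"
      if "j \<le> n" "x \<in> Z n" for n j x using X.fd_eq2 that s by blast
    show "fc X (Suc n) i (dg X n j x) = dg X (n - 1) j (fc X n (i - 1) x)"
      if "Suc j < i" "i \<le> Suc n" "x \<in> Z n" for n i j x using X.fd_gt that s by blast
  qed
qed

sublocale R: cob "restr X Z" \<nu>
  by unfold_locales (rule restr_sset, rule A4)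

lemma nt_norm: "normalized_cochain X 1 nt"
  unfolding normalized_cochain_def
proof (intro allI impI)
  fix m j x assume a: "Suc m = 1" "j \<le> m" "x \<in> cells X m"
  then have m: "m = 0" "j = 0" by auto
  show "nt (dg X m j x) = 0"
  proof (cases "dg X 0 0 x \<in> Z 1")
    case True
    have "x \<in> Z 0" using Zfc[of 0 0 "dg X 0 0 x"] True X.fd_eq1[of 0 0 x] a m by simp
    then show ?thesis using R.mnorm[of x] True m unfolding nt_def by (simp add: restr_def)
  qed (simp add: nt_def m)
qed

sublocale N: cob X nt
  by unfold_locales (rule nt_norm)

abbreviation "Q \<equiv> quot X Z"
abbreviation "q \<equiv> qmap Z"

lemma qmap_cells: "x \<in> cells X n \<Longrightarrow> q n x \<in> cells Q n"
  unfolding qmap_def quot_cells by auto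

lemma qmap_fc: "i \<le> Suc n \<Longrightarrow> x \<in> cells X (Suc n) \<Longrightarrow> q n (fc X (Suc n) i x) = fc Q (Suc n) i (q (Suc n) x)"
  unfolding qmap_def using Zfc[of i n x] by (auto simp: quot_fc_None quot_fc_Some)

lemma qmap_dg: "j \<le> n \<Longrightarrow> x \<in> cells X n \<Longrightarrow> q (Suc n) (dg X n j x) = dg Q n j (q n x)"
  unfolding qmap_def using Zdg[of j n x] Zdg_not[of j n x] by (auto simp: quot_dg_None quot_dg_Some)

lemma qmap_smap: "smap X Q q"
  unfolding smap_def using qmap_cells qmap_fc qmap_dg by blast

lemma beta_None: "\<beta> None = 0"
proof -
  have "None \<in> cells Q 1" unfolding quot_cells by simp
  then have "\<beta> (dg Q 1 0 None) = 0" using A6 unfolding normalized_2cocycle_def normalized_cochain_def by auto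
  then show ?thesis by (simp add: quot_dg_None)
qed

lemma eta_None: "eta Q \<beta> n None = replicate (n - 1) 0"
proof (induction n rule: less_induct)
  case (less n)
  show ?case
  proof (cases n)
    case (Suc n1)
    then show ?thesis
    proof (cases n1)
      case (Suc n2)
      then show ?thesis using less[of "Suc n2"] \<open>n = Suc n1\<close>
        by (simp add: quot_fc_None lf_quot_None beta_None)
    qed simp
  qed simp
qed

abbreviation "\<Gamma> \<equiv> cobdry1 X nt"

lemma eta_alpha:
  assumes "x \<in> cells X n"
  shows "eta X \<alpha> n x = map2 (+) (eta Q \<beta> n (q n x)) (eta X \<Gamma> n x)"
proof -
  have "\<forall>z\<in>cells X 2. \<alpha> z = \<beta> (q 2 z) + \<Gamma> z" using A7 unfolding nt_def by simp
  then have "eta X \<alpha> n x = eta X (\<lambda>z. \<beta> (q 2 z) + \<Gamma> z) n x" by (rule X.eta_cong[OF _ assms])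
  also have "\<dots> = map2 (+) (eta X (\<lambda>z. \<beta> (q 2 z)) n x) (eta X \<Gamma> n x)" by (rule eta_add)
  also have "eta X (\<lambda>z. \<beta> (q 2 z)) n x = eta Q \<beta> n (q n x)"
    by (rule X.eta_pull[OF qmap_smap _ assms]) simp
  finally show ?thesis .
qed

end

context main
begin

abbreviation "RR \<equiv> restr X Z"

lemma etaR: "z \<in> Z n \<Longrightarrow> eta RR \<alpha> n z = eta RR (cobdry1 RR \<nu>) n z"
  by (rule R.eta_cong) (use A5 in auto)

lemma ccR_eq: "z \<in> Z n \<Longrightarrow> cc RR \<nu> n z = cc X nt n z"
proof -
  assume z: "z \<in> Z n"
  have "cc RR \<nu> n z = cc RR nt n z"
    by (rule R.cc_cong) (use z in \<open>auto simp: nt_def\<close>)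
  then show ?thesis by (simp add: cc_restr)
qed

definition "g0 = (\<lambda>n z. if z \<in> Z n then cc RR \<nu> n z else [])"

definition "Pg g \<longleftrightarrow> smap RR (twisted RR \<alpha>) (\<lambda>n z. (g n z, z)) \<and>
                              (\<forall>z \<in> Z 1. g 1 z = [\<nu> z]) \<and>
                              (\<forall>n z. z \<notin> Z n \<longrightarrow> g n z = [])"

lemma Pg_g0: "Pg g0"
  unfolding Pg_def smap_def
proof (intro conjI allI impI ballI)
  fix n x assume "x \<in> cells RR n"
  then show "(g0 n x, x) \<in> cells (twisted RR \<alpha>) n" unfolding tw_cells g0_def by (simp add: cc_len)
next
  fix n i x assume i: "i \<le> Suc n" and x: "x \<in> cells RR (Suc n)"
  have xz: "x \<in> Z (Suc n)" using x by simp
  have fz: "fc X (Suc n) i x \<in> Z n" using Zfc[OF i xz] .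
  show "(g0 n (fc RR (Suc n) i x), fc RR (Suc n) i x) = fc (twisted RR \<alpha>) (Suc n) i (g0 (Suc n) x, x)"
  proof (cases "i = 0")
    case True
    have "map2 (+) (tl (cc RR \<nu> (Suc n) x)) (eta RR \<alpha> (Suc n) x) = cc RR \<nu> n (fc RR (Suc n) 0 x)"
      using R.cc_sec0[of x n] etaR[OF xz] x by simp
    then show ?thesis using True xz fz unfolding tw_fc g0_def by simp
  next
    case False
    have "nerve_face (Suc n) i (cc RR \<nu> (Suc n) x) = cc RR \<nu> n (fc RR (Suc n) i x)"
      using R.cc_face[of i n x] False i x by simp
    then show ?thesis using False xz fz unfolding tw_fc g0_def by simp
  qed
next
  fix n j x assume j: "j \<le> n" and x: "x \<in> cells RR n"
  have xz: "x \<in> Z n" using x by simp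
  have dz: "dg X n j x \<in> Z (Suc n)" using Zdg[OF j xz] .
  have "cc RR \<nu> (Suc n) (dg RR n j x) = nerve_degen j (cc RR \<nu> n x)"
    using R.cc_degen[OF j x] .
  then show "(g0 (Suc n) (dg RR n j x), dg RR n j x) = dg (twisted RR \<alpha>) n j (g0 n x, x)"
    unfolding tw_dg g0_def using xz dz by simp
next
  fix z assume "z \<in> Z 1"
  then show "g0 1 z = [\<nu> z]" unfolding g0_def by simp
next
  fix n z assume "z \<notin> Z n"
  then show "g0 n z = []" unfolding g0_def by simp
qed

lemma butlast_tl_eq:
  assumes "length a = Suc (Suc m)" "length b = Suc (Suc m)" "butlast a = butlast b" "tl a = tl b"
  shows "a = b"
proof (rule nth_equalityI)
  show "length a = length b" using assms by simp
next
  fix k assume k: "k < length a"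
  show "a ! k = b ! k"
  proof (cases "k < Suc m")
    case True
    have "a ! k = butlast a ! k" using True assms(1) by (simp add: nth_butlast)
    also have "\<dots> = butlast b ! k" using assms by simp
    also have "\<dots> = b ! k" using True assms(2) by (simp add: nth_butlast)
    finally show ?thesis .
  next
    case False
    then have k': "k = Suc m" using k assms by simp
    have "a ! k = tl a ! m" using k' assms(1) by (simp add: nth_tl)
    also have "\<dots> = tl b ! m" using assms by simp
    also have "\<dots> = b ! k" using k' assms(2) by (simp add: nth_tl)
    finally show ?thesis .
  qed
qed

lemma Pg_unique:
  assumes P: "Pg g"
  shows "g n z = g0 n z"
proof (induction n arbitrary: z rule: less_induct)
  case (less n)
  have sm: "smap RR (twisted RR \<alpha>) (\<lambda>n z. (g n z, z))" and g1: "\<forall>z \<in> Z 1. g 1 z = [\<nu> z]"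
    and goff: "\<forall>n z. z \<notin> Z n \<longrightarrow> g n z = []" using P unfolding Pg_def by auto
  have gc: "\<And>n x. x \<in> Z n \<Longrightarrow> length (g n x) = n"
    using sm[unfolded smap_def, THEN conjunct1] unfolding tw_cells by auto
  have gf: "\<And>n i x. i \<le> Suc n \<Longrightarrow> x \<in> Z (Suc n) \<Longrightarrow>
      (g n (fc X (Suc n) i x), fc X (Suc n) i x) = fc (twisted RR \<alpha>) (Suc n) i (g (Suc n) x, x)"
    using sm[unfolded smap_def, THEN conjunct2, THEN conjunct1] by simp
  show ?case
  proof (cases "z \<in> Z n")
    case False then show ?thesis using goff unfolding g0_def by simp
  next
    case True
    show ?thesis
    proof (cases n)
      case 0 then show ?thesis using gc[OF True] True unfolding g0_def by simp
    next
      case (Suc n1)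
      show ?thesis
      proof (cases n1)
        case 0 then show ?thesis using g1 True \<open>n = Suc n1\<close> unfolding g0_def by simp
      next
        case (Suc m)
        have n: "n = Suc (Suc m)" using Suc \<open>n = Suc n1\<close> by simp
        have z: "z \<in> Z (Suc (Suc m))" using True n by simp
        have zc: "z \<in> cells RR (Suc (Suc m))" using z by simp
        have fz: "fc X (Suc (Suc m)) i z \<in> Z (Suc m)" if "i \<le> Suc (Suc m)" for i using Zfc[OF that z] .
        have ih: "g (Suc m) (fc X (Suc (Suc m)) i z) = cc RR \<nu> (Suc m) (fc X (Suc (Suc m)) i z)"
          if "i \<le> Suc (Suc m)" for i using less.IH[of "Suc m"] fz[OF that] n unfolding g0_def by simp
        have lg: "length (g (Suc (Suc m)) z) = Suc (Suc m)" using gc[OF z] .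
        have lc: "length (cc RR \<nu> (Suc (Suc m)) z) = Suc (Suc m)" by (rule cc_len)
        have bl: "butlast (g (Suc (Suc m)) z) = butlast (cc RR \<nu> (Suc (Suc m)) z)"
        proof -
          have "butlast (g (Suc (Suc m)) z) = nerve_face (Suc (Suc m)) (Suc (Suc m)) (g (Suc (Suc m)) z)"
            unfolding nerve_face_def by simp
          also have "\<dots> = g (Suc m) (fc X (Suc (Suc m)) (Suc (Suc m)) z)"
            using gf[of "Suc (Suc m)" "Suc m" z] z unfolding tw_fc by simp
          also have "\<dots> = cc RR \<nu> (Suc m) (fc X (Suc (Suc m)) (Suc (Suc m)) z)" using ih by simp
          also have "\<dots> = nerve_face (Suc (Suc m)) (Suc (Suc m)) (cc RR \<nu> (Suc (Suc m)) z)"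
            using R.cc_face[of "Suc (Suc m)" "Suc m" z] zc by simp
          also have "\<dots> = butlast (cc RR \<nu> (Suc (Suc m)) z)" unfolding nerve_face_def by simp
          finally show ?thesis .
        qed
        have tl: "tl (g (Suc (Suc m)) z) = tl (cc RR \<nu> (Suc (Suc m)) z)"
        proof -
          have e1: "map2 (+) (tl (g (Suc (Suc m)) z)) (eta RR \<alpha> (Suc (Suc m)) z) = g (Suc m) (fc X (Suc (Suc m)) 0 z)"
            using gf[of 0 "Suc m" z] z unfolding tw_fc by simp
          have e2: "map2 (+) (tl (cc RR \<nu> (Suc (Suc m)) z)) (eta RR \<alpha> (Suc (Suc m)) z) = cc RR \<nu> (Suc m) (fc X (Suc (Suc m)) 0 z)"
            using R.cc_sec0[of z "Suc m"] etaR[OF z] zc by simp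
          have e: "map2 (+) (tl (g (Suc (Suc m)) z)) (eta RR \<alpha> (Suc (Suc m)) z) =
                   map2 (+) (tl (cc RR \<nu> (Suc (Suc m)) z)) (eta RR \<alpha> (Suc (Suc m)) z)"
            using e1 e2 ih[of 0] by simp
          show ?thesis
          proof (rule nth_equalityI)
            show "length (tl (g (Suc (Suc m)) z)) = length (tl (cc RR \<nu> (Suc (Suc m)) z))" using lg lc by simp
          next
            fix k assume k: "k < length (tl (g (Suc (Suc m)) z))"
            have "map2 (+) (tl (g (Suc (Suc m)) z)) (eta RR \<alpha> (Suc (Suc m)) z) ! k =
                  map2 (+) (tl (cc RR \<nu> (Suc (Suc m)) z)) (eta RR \<alpha> (Suc (Suc m)) z) ! k" using e by simp
            then show "tl (g (Suc (Suc m)) z) ! k = tl (cc RR \<nu> (Suc (Suc m)) z) ! k"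
              using k lg lc by (simp add: eta_len del: cc.simps eta.simps)
          qed
        qed
        show ?thesis using butlast_tl_eq[OF lg lc bl tl] z n unfolding g0_def by simp
      qed
    qed
  qed
qed

lemma phi_eq: "z \<in> Z n \<Longrightarrow> phi_nu X Z \<alpha> \<nu> n z = cc X nt n z"
proof -
  assume z: "z \<in> Z n"
  have "phi_nu X Z \<alpha> \<nu> = g0"
    unfolding phi_nu_def Pg_def[symmetric]
  proof (rule the_equality)
    show "Pg g0" by (rule Pg_g0)
  next
    fix g assume "Pg g"
    then show "g = g0" using Pg_unique by blast
  qed
  then show ?thesis using z ccR_eq unfolding g0_def by simp
qed

end

context main
begin

abbreviation "c \<equiv> cc X nt"
abbreviation "TA \<equiv> twisted X \<alpha>"
abbreviation "TB \<equiv> twisted Q \<beta>"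

lemma K_F:
  assumes x: "x \<in> cells X (Suc n)" and g: "length g = Suc n" and i: "i \<le> Suc n"
  shows "fc TA (Suc n) i (map2 (+) g (c (Suc n) x), x) =
     (map2 (+) (fst (fc TB (Suc n) i (g, q (Suc n) x))) (c n (fc X (Suc n) i x)), fc X (Suc n) i x)"
proof (cases "i = 0")
  case True
  have ea: "eta X \<alpha> (Suc n) x = map2 (+) (eta Q \<beta> (Suc n) (q (Suc n) x)) (eta X \<Gamma> (Suc n) x)"
    by (rule eta_alpha[OF x])
  have sec: "c n (fc X (Suc n) 0 x) = map2 (+) (tl (c (Suc n) x)) (eta X \<Gamma> (Suc n) x)"
    using N.cc_sec0[OF x] by simp
  have "map2 (+) (tl (map2 (+) g (c (Suc n) x))) (eta X \<alpha> (Suc n) x) =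
        map2 (+) (map2 (+) (tl g) (eta Q \<beta> (Suc n) (q (Suc n) x))) (c n (fc X (Suc n) 0 x))"
    unfolding ea sec
    by (rule nth_equalityI) (use g in \<open>auto simp: cc_len eta_len nth_tl algebra_simps simp del: cc.simps eta.simps\<close>)
  then show ?thesis unfolding True tw_fc by simp
next
  case False
  have "nerve_face (Suc n) i (map2 (+) g (c (Suc n) x)) = map2 (+) (nerve_face (Suc n) i g) (nerve_face (Suc n) i (c (Suc n) x))"
    by (rule nf_map2_add) (use g i False in \<open>auto simp: cc_len simp del: cc.simps\<close>)
  also have "nerve_face (Suc n) i (c (Suc n) x) = c n (fc X (Suc n) i x)"
    using N.cc_face[of i n x] False i x by simp
  finally show ?thesis using False unfolding tw_fc by simp
qed

lemma K_G:
  assumes x: "x \<in> cells X (Suc n)" and g: "length g = Suc n" and i: "i \<le> Suc n"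
  shows "fc TB (Suc n) i (map2 (-) g (c (Suc n) x), q (Suc n) x) =
     (map2 (-) (fst (fc TA (Suc n) i (g, x))) (c n (fc X (Suc n) i x)), q n (fc X (Suc n) i x))"
proof (cases "i = 0")
  case True
  have ea: "eta X \<alpha> (Suc n) x = map2 (+) (eta Q \<beta> (Suc n) (q (Suc n) x)) (eta X \<Gamma> (Suc n) x)"
    by (rule eta_alpha[OF x])
  have sec: "c n (fc X (Suc n) 0 x) = map2 (+) (tl (c (Suc n) x)) (eta X \<Gamma> (Suc n) x)"
    using N.cc_sec0[OF x] by simp
  have "map2 (+) (tl (map2 (-) g (c (Suc n) x))) (eta Q \<beta> (Suc n) (q (Suc n) x)) =
        map2 (-) (map2 (+) (tl g) (eta X \<alpha> (Suc n) x)) (c n (fc X (Suc n) 0 x))"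
    unfolding ea sec
    by (rule nth_equalityI) (use g in \<open>auto simp: cc_len eta_len nth_tl algebra_simps simp del: cc.simps eta.simps\<close>)
  moreover have "fc Q (Suc n) 0 (q (Suc n) x) = q n (fc X (Suc n) 0 x)" using qmap_fc[of 0 n x] x by simp
  ultimately show ?thesis unfolding True tw_fc by simp
next
  case False
  have "nerve_face (Suc n) i (map2 (-) g (c (Suc n) x)) = map2 (-) (nerve_face (Suc n) i g) (nerve_face (Suc n) i (c (Suc n) x))"
    by (rule nf_map2_diff) (use g i False in \<open>auto simp: cc_len simp del: cc.simps\<close>)
  also have "nerve_face (Suc n) i (c (Suc n) x) = c n (fc X (Suc n) i x)"
    using N.cc_face[of i n x] False i x by simp
  finally show ?thesis using False qmap_fc[of i n x] x i unfolding tw_fc by simp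
qed

lemma D_F:
  assumes x: "x \<in> cells X n" and g: "length g = n" and j: "j \<le> n"
  shows "dg TA n j (map2 (+) g (c n x), x) =
     (map2 (+) (fst (dg TB n j (g, q n x))) (c (Suc n) (dg X n j x)), dg X n j x)"
  unfolding tw_dg using nd_map2_add[OF g cc_len j] N.cc_degen[OF j x] by simp

lemma D_G:
  assumes x: "x \<in> cells X n" and g: "length g = n" and j: "j \<le> n"
  shows "dg TB n j (map2 (-) g (c n x), q n x) =
     (map2 (-) (fst (dg TA n j (g, x))) (c (Suc n) (dg X n j x)), q (Suc n) (dg X n j x))"
  unfolding tw_dg using nd_map2_diff[OF g cc_len j] N.cc_degen[OF j x] qmap_dg[OF j x] by simp

end

context main
begin

definition Fm :: "(nat \<Rightarrow> 'a option \<Rightarrow> ('h list \<times> 'a option \<Rightarrow> real)) \<Rightarrow> (nat \<Rightarrow> 'a \<Rightarrow> ('h list \<times> 'a \<Rightarrow> real))" where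
  "Fm p = (\<lambda>n x. if x \<in> cells X n then Dmap (\<lambda>a. (map2 (+) (fst a) (c n x), x)) (p n (q n x)) else (\<lambda>_. 0))"

definition Gm :: "(nat \<Rightarrow> 'a \<Rightarrow> ('h list \<times> 'a \<Rightarrow> real)) \<Rightarrow> (nat \<Rightarrow> 'a option \<Rightarrow> ('h list \<times> 'a option \<Rightarrow> real))" where
  "Gm r = (\<lambda>n w. if w \<in> cells Q n then (case w of None \<Rightarrow> delta (replicate n 0, None)
                 | Some x \<Rightarrow> Dmap (\<lambda>a. (map2 (-) (fst a) (c n x), Some x)) (r n x)) else (\<lambda>_. 0))"

lemma None_cells: "None \<in> cells Q n" unfolding quot_cells by simp

lemma p_None:
  assumes p: "sdist Q \<beta> p"
  shows "p n None = delta (replicate n 0, None)"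
proof (induction n)
  case 0
  have D: "p 0 None \<in> Dist (cells TB 0)" by (rule sd_cells[OF p None_cells])
  have "supp (p 0 None) \<subseteq> {([], None)}"
  proof
    fix a assume "a \<in> supp (p 0 None)"
    then have "a = (fst a, None) \<and> length (fst a) = 0" by (rule sd_supp[OF p None_cells])
    then show "a \<in> {([], None)}" by (cases a) auto
  qed
  then show ?case using Dist_single[OF D] by simp
next
  case (Suc n)
  have "p (Suc n) (dg Q n 0 None) = Dmap (dg TB n 0) (p n None)"
    by (rule sd_deg[OF p]) (auto simp: None_cells)
  then show ?case using Suc by (simp add: quot_dg_None Dmap_delta tw_dg nd0)
qed

lemma Gm_q:
  assumes r: "r \<in> sDist_rel X Z \<alpha> \<nu>" and x: "x \<in> cells X n"
  shows "Gm r n (q n x) = Dmap (\<lambda>a. (map2 (-) (fst a) (c n x), q n x)) (r n x)"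
proof (cases "x \<in> Z n")
  case True
  have "r n x = delta (phi_nu X Z \<alpha> \<nu> n x, x)" using r True unfolding sDist_rel_def by blast
  then have rx: "r n x = delta (c n x, x)" using phi_eq[OF True] by simp
  have "map2 (-) (c n x) (c n x) = replicate n 0"
    by (rule nth_equalityI) (auto simp: cc_len simp del: cc.simps)
  then show ?thesis unfolding Gm_def rx Dmap_delta using True None_cells by (simp add: qmap_def del: cc.simps)
next
  case False
  then show ?thesis unfolding Gm_def using x qmap_cells[OF x] by (simp add: qmap_def)
qed

lemma Fm_in:
  assumes P: "p \<in> sDist Q \<beta>"
  shows "Fm p \<in> sDist_rel X Z \<alpha> \<nu>"
proof -
  have p: "sdist Q \<beta> p" using P unfolding sDist_def by simp
  have Dp: "p n (q n x) \<in> Dist (cells TB n)" if "x \<in> cells X n" for n x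
    using sd_cells[OF p qmap_cells[OF that]] .
  have fin: "finite (supp (p n (q n x)))" if "x \<in> cells X n" for n x using Dist_fin[OF Dp[OF that]] .
  have spp: "a = (fst a, q n x) \<and> length (fst a) = n" if "x \<in> cells X n" "a \<in> supp (p n (q n x))" for n x a
    using sd_supp[OF p qmap_cells[OF that(1)] that(2)] .
  have sd: "sdist X \<alpha> (Fm p)"
  proof (rule sdistI)
    fix n x assume x: "x \<in> cells X n"
    show "Fm p n x \<in> Dist (cells TA n)"
      unfolding Fm_def using x
      by (simp del: cc.simps, intro Dmap_Dist[OF Dp[OF x]]) (use spp[OF x] in \<open>auto simp: tw_cells cc_len simp del: cc.simps\<close>)
  next
    fix n i x assume i: "i \<le> Suc n" and x: "x \<in> cells X (Suc n)"
    have fx: "fc X (Suc n) i x \<in> cells X n" using X.fc_cells[OF i x] .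
    have "Fm p n (fc X (Suc n) i x) = Dmap (\<lambda>a. (map2 (+) (fst a) (c n (fc X (Suc n) i x)), fc X (Suc n) i x))
        (p n (fc Q (Suc n) i (q (Suc n) x)))"
      unfolding Fm_def using fx qmap_fc[OF i x] by simp
    also have "\<dots> = Dmap (\<lambda>a. (map2 (+) (fst a) (c n (fc X (Suc n) i x)), fc X (Suc n) i x))
        (Dmap (fc TB (Suc n) i) (p (Suc n) (q (Suc n) x)))"
      using sd_face[OF p i qmap_cells[OF x]] by simp
    also have "\<dots> = Dmap (\<lambda>a. (map2 (+) (fst (fc TB (Suc n) i a)) (c n (fc X (Suc n) i x)), fc X (Suc n) i x))
        (p (Suc n) (q (Suc n) x))"
      by (rule Dmap_comp[OF fin[OF x]])
    also have "\<dots> = Dmap (\<lambda>a. fc TA (Suc n) i (map2 (+) (fst a) (c (Suc n) x), x)) (p (Suc n) (q (Suc n) x))"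
    proof (rule Dmap_cong)
      fix a assume a: "a \<in> supp (p (Suc n) (q (Suc n) x))"
      have a': "a = (fst a, q (Suc n) x)" "length (fst a) = Suc n" using spp[OF x a] by auto
      show "(map2 (+) (fst (fc TB (Suc n) i a)) (c n (fc X (Suc n) i x)), fc X (Suc n) i x) =
            fc TA (Suc n) i (map2 (+) (fst a) (c (Suc n) x), x)"
        using K_F[OF x a'(2) i] a'(1) by (metis)
    qed
    also have "\<dots> = Dmap (fc TA (Suc n) i) (Dmap (\<lambda>a. (map2 (+) (fst a) (c (Suc n) x), x)) (p (Suc n) (q (Suc n) x)))"
      by (rule Dmap_comp[OF fin[OF x], symmetric])
    also have "\<dots> = Dmap (fc TA (Suc n) i) (Fm p (Suc n) x)"
      unfolding Fm_def using x by simp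
    finally show "Fm p n (fc X (Suc n) i x) = Dmap (fc TA (Suc n) i) (Fm p (Suc n) x)" .
  next
    fix n j x assume j: "j \<le> n" and x: "x \<in> cells X n"
    have dx: "dg X n j x \<in> cells X (Suc n)" using X.dg_cells[OF j x] .
    have "Fm p (Suc n) (dg X n j x) = Dmap (\<lambda>a. (map2 (+) (fst a) (c (Suc n) (dg X n j x)), dg X n j x))
        (p (Suc n) (dg Q n j (q n x)))"
      unfolding Fm_def using dx qmap_dg[OF j x] by simp
    also have "\<dots> = Dmap (\<lambda>a. (map2 (+) (fst a) (c (Suc n) (dg X n j x)), dg X n j x))
        (Dmap (dg TB n j) (p n (q n x)))"
      using sd_deg[OF p j qmap_cells[OF x]] by simp
    also have "\<dots> = Dmap (\<lambda>a. (map2 (+) (fst (dg TB n j a)) (c (Suc n) (dg X n j x)), dg X n j x)) (p n (q n x))"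
      by (rule Dmap_comp[OF fin[OF x]])
    also have "\<dots> = Dmap (\<lambda>a. dg TA n j (map2 (+) (fst a) (c n x), x)) (p n (q n x))"
    proof (rule Dmap_cong)
      fix a assume a: "a \<in> supp (p n (q n x))"
      have a': "a = (fst a, q n x)" "length (fst a) = n" using spp[OF x a] by auto
      show "(map2 (+) (fst (dg TB n j a)) (c (Suc n) (dg X n j x)), dg X n j x) = dg TA n j (map2 (+) (fst a) (c n x), x)"
        using D_F[OF x a'(2) j] a'(1) by metis
    qed
    also have "\<dots> = Dmap (dg TA n j) (Dmap (\<lambda>a. (map2 (+) (fst a) (c n x), x)) (p n (q n x)))"
      by (rule Dmap_comp[OF fin[OF x], symmetric])
    also have "\<dots> = Dmap (dg TA n j) (Fm p n x)"
      unfolding Fm_def using x by simp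
    finally show "Fm p (Suc n) (dg X n j x) = Dmap (dg TA n j) (Fm p n x)" .
  next
    fix n x assume x: "x \<in> cells X n"
    have "Dmap snd (Fm p n x) = Dmap (\<lambda>a. x) (p n (q n x))"
      unfolding Fm_def using x Dmap_comp[OF fin[OF x], of snd "\<lambda>a. (map2 (+) (fst a) (c n x), x)"] by simp
    then show "Dmap snd (Fm p n x) = delta x" using Dmap_const[OF Dp[OF x]] by simp
  next
    fix n x assume "x \<notin> cells X n"
    then show "Fm p n x = (\<lambda>_. 0)" unfolding Fm_def by simp
  qed
  have rel: "Fm p n z = delta (phi_nu X Z \<alpha> \<nu> n z, z)" if z: "z \<in> Z n" for n z
  proof -
    have zc: "z \<in> cells X n" using Zsub z by blast
    have "q n z = None" using z unfolding qmap_def by simp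
    then have "Fm p n z = Dmap (\<lambda>a. (map2 (+) (fst a) (c n z), z)) (delta (replicate n 0, None :: 'a option))"
      unfolding Fm_def using zc p_None[OF p] by simp
    also have "\<dots> = delta (map2 (+) (replicate n 0) (c n z), z)" by (simp add: Dmap_delta del: cc.simps)
    also have "map2 (+) (replicate n 0) (c n z) = c n z"
      by (rule nth_equalityI) (auto simp: cc_len simp del: cc.simps)
    finally show ?thesis using phi_eq[OF z] by simp
  qed
  show ?thesis unfolding sDist_rel_def sDist_def using sd rel by blast
qed

end

context main
begin

lemma Gm_in:
  assumes Rr: "r \<in> sDist_rel X Z \<alpha> \<nu>"
  shows "Gm r \<in> sDist Q \<beta>"
proof -
  have r: "sdist X \<alpha> r" using Rr unfolding sDist_rel_def sDist_def by simp
  have Dr: "r n x \<in> Dist (cells TA n)" if "x \<in> cells X n" for n x using sd_cells[OF r that] .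
  have fin: "finite (supp (r n x))" if "x \<in> cells X n" for n x using Dist_fin[OF Dr[OF that]] .
  have spp: "a = (fst a, x) \<and> length (fst a) = n" if "x \<in> cells X n" "a \<in> supp (r n x)" for n x a
    using sd_supp[OF r that] .
  have GN: "Gm r n None = delta (replicate n 0, None)" for n unfolding Gm_def using None_cells by simp
  have cellsQ: "w \<in> cells Q n \<Longrightarrow> w = None \<or> (\<exists>x. x \<in> cells X n \<and> x \<notin> Z n \<and> w = q n x)" for w n
    unfolding quot_cells qmap_def by auto
  have Gq: "Gm r n (q n x) = Dmap (\<lambda>a. (map2 (-) (fst a) (c n x), q n x)) (r n x)" if "x \<in> cells X n" for n x
    using Gm_q[OF Rr that] .
  have sd: "sdist Q \<beta> (Gm r)"
  proof (rule sdistI)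
    fix n w assume w: "w \<in> cells Q n"
    show "Gm r n w \<in> Dist (cells TB n)"
      using cellsQ[OF w]
    proof
      assume wN: "w = None" show ?thesis unfolding wN GN by (rule delta_Dist) (simp add: tw_cells None_cells)
    next
      assume "\<exists>x. x \<in> cells X n \<and> x \<notin> Z n \<and> w = q n x"
      then obtain x where x: "x \<in> cells X n" and wq: "w = q n x" by blast
      show ?thesis unfolding wq Gq[OF x]
        by (rule Dmap_Dist[OF Dr[OF x]]) (use spp[OF x] qmap_cells[OF x] in \<open>auto simp: tw_cells cc_len simp del: cc.simps\<close>)
    qed
  next
    fix n i w assume i: "i \<le> Suc n" and w: "w \<in> cells Q (Suc n)"
    show "Gm r n (fc Q (Suc n) i w) = Dmap (fc TB (Suc n) i) (Gm r (Suc n) w)"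
      using cellsQ[OF w]
    proof
      assume wN: "w = None"
      have "fc TB (Suc n) i (replicate (Suc n) 0, None) = (replicate n 0, None)"
      proof (cases "i = 0")
        case True then show ?thesis unfolding tw_fc by (simp add: eta_None quot_fc_None del: replicate.simps)
      next
        case False then show ?thesis unfolding tw_fc using nf_zero[OF i] by (simp add: quot_fc_None del: replicate.simps)
      qed
      then show ?thesis unfolding wN quot_fc_None GN Dmap_delta by simp
    next
      assume "\<exists>x. x \<in> cells X (Suc n) \<and> x \<notin> Z (Suc n) \<and> w = q (Suc n) x"
      then obtain x where x: "x \<in> cells X (Suc n)" and wq: "w = q (Suc n) x" by blast
      have fx: "fc X (Suc n) i x \<in> cells X n" using X.fc_cells[OF i x] .
      have "Gm r n (fc Q (Suc n) i w) = Gm r n (q n (fc X (Suc n) i x))" using qmap_fc[OF i x] wq by simp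
      also have "\<dots> = Dmap (\<lambda>a. (map2 (-) (fst a) (c n (fc X (Suc n) i x)), q n (fc X (Suc n) i x)))
           (Dmap (fc TA (Suc n) i) (r (Suc n) x))"
        unfolding Gq[OF fx] sd_face[OF r i x] ..
      also have "\<dots> = Dmap (\<lambda>a. (map2 (-) (fst (fc TA (Suc n) i a)) (c n (fc X (Suc n) i x)), q n (fc X (Suc n) i x))) (r (Suc n) x)"
        by (rule Dmap_comp[OF fin[OF x]])
      also have "\<dots> = Dmap (\<lambda>a. fc TB (Suc n) i (map2 (-) (fst a) (c (Suc n) x), q (Suc n) x)) (r (Suc n) x)"
      proof (rule Dmap_cong)
        fix a assume a: "a \<in> supp (r (Suc n) x)"
        have a': "a = (fst a, x)" "length (fst a) = Suc n" using spp[OF x a] by auto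
        show "(map2 (-) (fst (fc TA (Suc n) i a)) (c n (fc X (Suc n) i x)), q n (fc X (Suc n) i x)) =
              fc TB (Suc n) i (map2 (-) (fst a) (c (Suc n) x), q (Suc n) x)"
          using K_G[OF x a'(2) i] a'(1) by metis
      qed
      also have "\<dots> = Dmap (fc TB (Suc n) i) (Dmap (\<lambda>a. (map2 (-) (fst a) (c (Suc n) x), q (Suc n) x)) (r (Suc n) x))"
        by (rule Dmap_comp[OF fin[OF x], symmetric])
      also have "\<dots> = Dmap (fc TB (Suc n) i) (Gm r (Suc n) w)" unfolding wq Gq[OF x] ..
      finally show ?thesis .
    qed
  next
    fix n j w assume j: "j \<le> n" and w: "w \<in> cells Q n"
    show "Gm r (Suc n) (dg Q n j w) = Dmap (dg TB n j) (Gm r n w)"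
      using cellsQ[OF w]
    proof
      assume wN: "w = None"
      show ?thesis unfolding wN quot_dg_None GN Dmap_delta tw_dg nd_zero[OF j] ..
    next
      assume "\<exists>x. x \<in> cells X n \<and> x \<notin> Z n \<and> w = q n x"
      then obtain x where x: "x \<in> cells X n" and wq: "w = q n x" by blast
      have dx: "dg X n j x \<in> cells X (Suc n)" using X.dg_cells[OF j x] .
      have "Gm r (Suc n) (dg Q n j w) = Gm r (Suc n) (q (Suc n) (dg X n j x))" using qmap_dg[OF j x] wq by simp
      also have "\<dots> = Dmap (\<lambda>a. (map2 (-) (fst a) (c (Suc n) (dg X n j x)), q (Suc n) (dg X n j x)))
           (Dmap (dg TA n j) (r n x))"
        unfolding Gq[OF dx] sd_deg[OF r j x] ..
      also have "\<dots> = Dmap (\<lambda>a. (map2 (-) (fst (dg TA n j a)) (c (Suc n) (dg X n j x)), q (Suc n) (dg X n j x))) (r n x)"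
        by (rule Dmap_comp[OF fin[OF x]])
      also have "\<dots> = Dmap (\<lambda>a. dg TB n j (map2 (-) (fst a) (c n x), q n x)) (r n x)"
      proof (rule Dmap_cong)
        fix a assume a: "a \<in> supp (r n x)"
        have a': "a = (fst a, x)" "length (fst a) = n" using spp[OF x a] by auto
        show "(map2 (-) (fst (dg TA n j a)) (c (Suc n) (dg X n j x)), q (Suc n) (dg X n j x)) =
              dg TB n j (map2 (-) (fst a) (c n x), q n x)"
          using D_G[OF x a'(2) j] a'(1) by metis
      qed
      also have "\<dots> = Dmap (dg TB n j) (Dmap (\<lambda>a. (map2 (-) (fst a) (c n x), q n x)) (r n x))"
        by (rule Dmap_comp[OF fin[OF x], symmetric])
      also have "\<dots> = Dmap (dg TB n j) (Gm r n w)" unfolding wq Gq[OF x] ..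
      finally show ?thesis .
    qed
  next
    fix n w assume w: "w \<in> cells Q n"
    show "Dmap snd (Gm r n w) = delta w"
      using cellsQ[OF w]
    proof
      assume wN: "w = None" show ?thesis unfolding wN GN Dmap_delta by simp
    next
      assume "\<exists>x. x \<in> cells X n \<and> x \<notin> Z n \<and> w = q n x"
      then obtain x where x: "x \<in> cells X n" and wq: "w = q n x" by blast
      have "Dmap snd (Gm r n w) = Dmap (\<lambda>a. q n x) (r n x)"
        unfolding wq Gq[OF x] using Dmap_comp[OF fin[OF x], of snd "\<lambda>a. (map2 (-) (fst a) (c n x), q n x)"] by simp
      then show ?thesis using Dmap_const[OF Dr[OF x]] wq by simp
    qed
  next
    fix n w assume "w \<notin> cells Q n"
    then show "Gm r n w = (\<lambda>_. 0)" unfolding Gm_def by simp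
  qed
  then show ?thesis unfolding sDist_def by simp
qed

lemma FG:
  assumes Rr: "r \<in> sDist_rel X Z \<alpha> \<nu>"
  shows "Fm (Gm r) = r"
proof (rule ext, rule ext)
  fix n x
  have r: "sdist X \<alpha> r" using Rr unfolding sDist_rel_def sDist_def by simp
  show "Fm (Gm r) n x = r n x"
  proof (cases "x \<in> cells X n")
    case False then show ?thesis unfolding Fm_def using sd_off[OF r False] by simp
  next
    case x: True
    have fin: "finite (supp (r n x))" using Dist_fin[OF sd_cells[OF r x]] .
    have "Fm (Gm r) n x = Dmap (\<lambda>a. (map2 (+) (fst a) (c n x), x)) (Dmap (\<lambda>a. (map2 (-) (fst a) (c n x), q n x)) (r n x))"
      unfolding Fm_def using x Gm_q[OF Rr x] by simp
    also have "\<dots> = Dmap (\<lambda>a. (map2 (+) (map2 (-) (fst a) (c n x)) (c n x), x)) (r n x)"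
      using Dmap_comp[OF fin, of "\<lambda>a. (map2 (+) (fst a) (c n x), x)" "\<lambda>a. (map2 (-) (fst a) (c n x), q n x)"] by (simp del: cc.simps)
    also have "\<dots> = Dmap (\<lambda>a. a) (r n x)"
    proof (rule Dmap_cong)
      fix a assume a: "a \<in> supp (r n x)"
      have a': "a = (fst a, x)" "length (fst a) = n" using sd_supp[OF r x a] by auto
      have "map2 (+) (map2 (-) (fst a) (c n x)) (c n x) = fst a"
        by (rule nth_equalityI) (use a'(2) in \<open>auto simp: cc_len simp del: cc.simps\<close>)
      then show "(map2 (+) (map2 (-) (fst a) (c n x)) (c n x), x) = a" using a'(1) by simp
    qed
    finally show ?thesis by (simp add: Dmap_id)
  qed
qed

lemma GF:
  assumes P: "p \<in> sDist Q \<beta>"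
  shows "Gm (Fm p) = p"
proof (rule ext, rule ext)
  fix n w
  have p: "sdist Q \<beta> p" using P unfolding sDist_def by simp
  show "Gm (Fm p) n w = p n w"
  proof (cases "w \<in> cells Q n")
    case False then show ?thesis unfolding Gm_def using sd_off[OF p False] by simp
  next
    case w: True
    show ?thesis
    proof (cases w)
      case None then show ?thesis unfolding Gm_def using w p_None[OF p] by simp
    next
      case (Some x)
      have x: "x \<in> cells X n" "x \<notin> Z n" using w Some unfolding quot_cells by auto
      have qx: "q n x = Some x" using x unfolding qmap_def by simp
      have fin: "finite (supp (p n (Some x)))" using Dist_fin[OF sd_cells[OF p w]] Some by simp
      have "Gm (Fm p) n w = Dmap (\<lambda>a. (map2 (-) (fst a) (c n x), Some x)) (Dmap (\<lambda>a. (map2 (+) (fst a) (c n x), x)) (p n (Some x)))"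
        unfolding Gm_def Fm_def using w Some x qx by simp
      also have "\<dots> = Dmap (\<lambda>a. (map2 (-) (map2 (+) (fst a) (c n x)) (c n x), Some x)) (p n (Some x))"
        using Dmap_comp[OF fin, of "\<lambda>a. (map2 (-) (fst a) (c n x), Some x)" "\<lambda>a. (map2 (+) (fst a) (c n x), x)"] by (simp del: cc.simps)
      also have "\<dots> = Dmap (\<lambda>a. a) (p n (Some x))"
      proof (rule Dmap_cong)
        fix a assume a: "a \<in> supp (p n (Some x))"
        have a': "a = (fst a, Some x)" "length (fst a) = n" using sd_supp[OF p w] a Some by auto
        have "map2 (-) (map2 (+) (fst a) (c n x)) (c n x) = fst a"
          by (rule nth_equalityI) (use a'(2) in \<open>auto simp: cc_len simp del: cc.simps\<close>)
        then show "(map2 (-) (map2 (+) (fst a) (c n x)) (c n x), Some x) = a" using a'(1) by simp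
      qed
      finally show ?thesis using Some by (simp add: Dmap_id)
    qed
  qed
qed

lemma Fm_mix:
  assumes P1: "p1 \<in> sDist Q \<beta>" and P2: "p2 \<in> sDist Q \<beta>"
  shows "Fm (mixd t p1 p2) = mixd t (Fm p1) (Fm p2)"
proof (intro ext)
  fix n x e
  have p1: "sdist Q \<beta> p1" using P1 unfolding sDist_def by simp
  have p2: "sdist Q \<beta> p2" using P2 unfolding sDist_def by simp
  show "Fm (mixd t p1 p2) n x e = mixd t (Fm p1) (Fm p2) n x e"
  proof (cases "x \<in> cells X n")
    case False then show ?thesis unfolding Fm_def mixd_def by simp
  next
    case x: True
    have f1: "finite (supp (p1 n (q n x)))" using Dist_fin[OF sd_cells[OF p1 qmap_cells[OF x]]] .
    have f2: "finite (supp (p2 n (q n x)))" using Dist_fin[OF sd_cells[OF p2 qmap_cells[OF x]]] .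
    show ?thesis unfolding Fm_def mixd_def using x Dmap_mix[OF f1 f2] by simp
  qed
qed

theorem main_iso: "\<exists>F. convex_iso (sDist (quot X Z) \<beta>) (sDist_rel X Z \<alpha> \<nu>) F"
proof (intro exI)
  show "convex_iso (sDist Q \<beta>) (sDist_rel X Z \<alpha> \<nu>) Fm"
    unfolding convex_iso_def
  proof (intro conjI ballI)
    show "bij_betw Fm (sDist Q \<beta>) (sDist_rel X Z \<alpha> \<nu>)"
      by (rule bij_betw_byWitness[where f' = Gm]) (use GF FG Fm_in Gm_in in auto)
  next
    fix p p' t assume "p \<in> sDist Q \<beta>" "p' \<in> sDist Q \<beta>" "t \<in> {0..1::real}"
    then show "Fm (mixd t p p') = mixd t (Fm p) (Fm p')" using Fm_mix by blast
  qed
qed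

end

theorem mainTheorem3:
  fixes X :: "'a sset" and Z :: "nat \<Rightarrow> 'a set"
    and \<alpha> :: "'a \<Rightarrow> 'h::ab_group_add" and \<nu> :: "'a \<Rightarrow> 'h"
    and \<beta> :: "'a option \<Rightarrow> 'h"
  assumes "is_sset X"
    and "is_subsset X Z"
    and "normalized_2cocycle X \<alpha>"
    and "normalized_cochain (restr X Z) 1 \<nu>"
    and "\<forall>z \<in> Z 2. cobdry1 (restr X Z) \<nu> z = \<alpha> z"
    and "normalized_2cocycle (quot X Z) \<beta>"
    and "\<forall>x \<in> cells X 2.
           \<beta> (qmap Z 2 x) = \<alpha> x - cobdry1 X (\<lambda>y. if y \<in> Z 1 then \<nu> y else 0) x"
  shows "\<exists>F. convex_iso (sDist (quot X Z) \<beta>) (sDist_rel X Z \<alpha> \<nu>) F"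
proof -
  interpret main X Z \<alpha> \<nu> \<beta>
    by unfold_locales (use assms in auto)
  show ?thesis by (rule main_iso)
qed

end
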